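(* Suppose that $E$ is a realizable matrix of rank $1$: $$ E=\begin{bmatrix} J_{k_1,k_2} & -J_{k_1,k_2} & 0\\ -J_{k_1,k_2} & J_{k_1,k_2} & 0\\ 0 & 0 & 0 \end{bmatrix} $$ for some $k_1, k_2>0$. Let $A=\begin{bmatrix} 0 & J_{k_1,k_2} & X_1\\ J_{k_1,k_2} & 0 & X_2\\ X_3 & X_4 & Y \end{bmatrix}$ be a $(0,1)$ matrix compatible with the partition of $E$. Then, we have the following: \begin{enumerate} \item $A$ and $A+E$ are Gram mates if and only if $\mathbf{1}^TX_1=\mathbf{1}^TX_2$ and $X_3\mathbf{1}=X_4\mathbf{1}$. \item $E$ is realizable. \item For any Gram mates via $E$, they are convertible to each other. \item For any Gram mates via $E$, their Gram singular value is $\sqrt{k_1k_2}$, and the corresponding left and right singular vectors are (up to sign) $\frac{1}{\sqrt{2k_1}}\begin{bmatrix} -\mathbf{1}_{k_1}\\\mathbf{1}_{k_1}\\0\end{bmatrix}$ and $\frac{1}{\sqrt{2k_2}}\begin{bmatrix} \mathbf{1}_{k_2}\\-\mathbf{1}_{k_2}\\0\end{bmatrix}$, respectively. \end{enumerate}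
   Context: $J_{p,q}$ denotes the $p\times q$ all-ones matrix and $\mathbf{1}_n$ the all-ones column vector of length $n$. Two $(0,1)$ matrices $A\neq B$ are Gram mates if $AA^T=BB^T$ and $A^TA=B^TB$. A $(0,1,-1)$ matrix $E$ with $E\mathbf{1}=0$, $\mathbf{1}^TE=0^T$ is realizable if there is a pair of Gram mates $A$, $A+E$; $A$ and $B$ are Gram mates via $E$ if they are Gram mates and $A-B=\pm E$. A $(0,1)$ matrix $A$ is convertible to a $(0,1)$ matrix $B$ if $B$ is obtained from a singular value decomposition $A=U\Sigma V^T$ by changing the signs of some $k\geq1$ positive singular values; these singular values are the Gram singular values of $A$ and $B$. *)

theory Defs
  imports Complex_Main "Jordan_Normal_Form.Matrix"
begin

definition zero_one_mat :: "real mat \<Rightarrow> bool" where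
  "zero_one_mat A \<longleftrightarrow> (\<forall>i<dim_row A. \<forall>j<dim_col A. A $$ (i,j) = 0 \<or> A $$ (i,j) = 1)"

definition zero_one_neg_mat :: "real mat \<Rightarrow> bool" where
  "zero_one_neg_mat E \<longleftrightarrow>
     (\<forall>i<dim_row E. \<forall>j<dim_col E. E $$ (i,j) = 0 \<or> E $$ (i,j) = 1 \<or> E $$ (i,j) = -1)"

definition gram_mates :: "real mat \<Rightarrow> real mat \<Rightarrow> bool" where
  "gram_mates A B \<longleftrightarrow>
     A \<in> carrier_mat (dim_row B) (dim_col B) \<and>
     zero_one_mat A \<and> zero_one_mat B \<and> A \<noteq> B \<and>
     A * transpose_mat A = B * transpose_mat B \<and>
     transpose_mat A * A = transpose_mat B * B"

definition realizable :: "real mat \<Rightarrow> bool" where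
  "realizable E \<longleftrightarrow>
     zero_one_neg_mat E \<and>
     (\<forall>i<dim_row E. (\<Sum>j<dim_col E. E $$ (i,j)) = 0) \<and>
     (\<forall>j<dim_col E. (\<Sum>i<dim_row E. E $$ (i,j)) = 0) \<and>
     (\<exists>A. A \<in> carrier_mat (dim_row E) (dim_col E) \<and> gram_mates A (A + E))"

definition gram_mates_via :: "real mat \<Rightarrow> real mat \<Rightarrow> real mat \<Rightarrow> bool" where
  "gram_mates_via E A B \<longleftrightarrow> gram_mates A B \<and> (A - B = E \<or> A - B = - E)"

definition orthogonal_mat :: "nat \<Rightarrow> real mat \<Rightarrow> bool" where
  "orthogonal_mat n U \<longleftrightarrow> U \<in> carrier_mat n n \<and> transpose_mat U * U = 1\<^sub>m n"

definition is_svd :: "real mat \<Rightarrow> real mat \<Rightarrow> real mat \<Rightarrow> real mat \<Rightarrow> bool" where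
  "is_svd A U S V \<longleftrightarrow>
     orthogonal_mat (dim_row A) U \<and> orthogonal_mat (dim_col A) V \<and>
     S \<in> carrier_mat (dim_row A) (dim_col A) \<and>
     (\<forall>i<dim_row A. \<forall>j<dim_col A. i \<noteq> j \<longrightarrow> S $$ (i,j) = 0) \<and>
     (\<forall>i<min (dim_row A) (dim_col A). S $$ (i,i) \<ge> 0) \<and>
     A = U * S * transpose_mat V"

definition flip_signs :: "nat set \<Rightarrow> real mat \<Rightarrow> real mat" where
  "flip_signs K S = mat (dim_row S) (dim_col S)
     (\<lambda>(i,j). if i = j \<and> i \<in> K then - S $$ (i,j) else S $$ (i,j))"

text \<open>Conversion data: B is obtained from the SVD A = U \<Sigma> V^T by changing the
  signs of the positive singular values indexed by the nonempty set K
  (these are the Gram singular values).\<close>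
definition conversion :: "real mat \<Rightarrow> real mat \<Rightarrow> real mat \<Rightarrow> real mat \<Rightarrow> real mat \<Rightarrow> nat set \<Rightarrow> bool" where
  "conversion A B U S V K \<longleftrightarrow>
     zero_one_mat A \<and> zero_one_mat B \<and>
     is_svd A U S V \<and> K \<noteq> {} \<and> K \<subseteq> {..<min (dim_row A) (dim_col A)} \<and>
     (\<forall>i\<in>K. S $$ (i,i) > 0) \<and>
     B = U * flip_signs K S * transpose_mat V"

definition convertible :: "real mat \<Rightarrow> real mat \<Rightarrow> bool" where
  "convertible A B \<longleftrightarrow> (\<exists>U S V K. conversion A B U S V K)"

text \<open>Rows are partitioned as k1 + k1 + p, columns as k2 + k2 + q.
  Block index 0, 1 or 2 of a row / column.\<close>
definition blk :: "nat \<Rightarrow> nat \<Rightarrow> nat" where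
  "blk k i = (if i < k then 0 else if i < 2 * k then 1 else 2)"

definition E_mat :: "nat \<Rightarrow> nat \<Rightarrow> nat \<Rightarrow> nat \<Rightarrow> real mat" where
  "E_mat k1 k2 p q = mat (2 * k1 + p) (2 * k2 + q)
     (\<lambda>(i,j). if blk k1 i = 2 \<or> blk k2 j = 2 then 0
              else if blk k1 i = blk k2 j then 1 else -1)"

text \<open>A = [0 J X1; J 0 X2; X3 X4 Y] is compatible with the partition.\<close>
definition compatible_form :: "nat \<Rightarrow> nat \<Rightarrow> real mat \<Rightarrow> bool" where
  "compatible_form k1 k2 A \<longleftrightarrow>
     (\<forall>i<dim_row A. \<forall>j<dim_col A. blk k1 i < 2 \<and> blk k2 j < 2 \<longrightarrow>
        A $$ (i,j) = (if blk k1 i = blk k2 j then 0 else 1))"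

text \<open>1^T X1 = 1^T X2 and X3 1 = X4 1.\<close>
definition sum_condition :: "nat \<Rightarrow> nat \<Rightarrow> real mat \<Rightarrow> bool" where
  "sum_condition k1 k2 A \<longleftrightarrow>
     (\<forall>j<dim_col A. blk k2 j = 2 \<longrightarrow>
        (\<Sum>i<k1. A $$ (i,j)) = (\<Sum>i\<in>{k1..<2*k1}. A $$ (i,j))) \<and>
     (\<forall>i<dim_row A. blk k1 i = 2 \<longrightarrow>
        (\<Sum>j<k2. A $$ (i,j)) = (\<Sum>j\<in>{k2..<2*k2}. A $$ (i,j)))"

definition left_vec :: "nat \<Rightarrow> nat \<Rightarrow> real vec" where
  "left_vec k1 p = vec (2 * k1 + p)
     (\<lambda>i. if blk k1 i = 0 then - 1 / sqrt (2 * real k1)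
          else if blk k1 i = 1 then 1 / sqrt (2 * real k1) else 0)"

definition right_vec :: "nat \<Rightarrow> nat \<Rightarrow> real vec" where
  "right_vec k2 q = vec (2 * k2 + q)
     (\<lambda>j. if blk k2 j = 0 then 1 / sqrt (2 * real k2)
          else if blk k2 j = 1 then - 1 / sqrt (2 * real k2) else 0)"

end

theory Submission
  imports Defs "Jordan_Normal_Form.Char_Poly"
begin

lemma mult_idx:
  assumes "dim_col A = dim_row B" "i < dim_row A" "j < dim_col B"
  shows "(A * B) $$ (i,j) = (\<Sum>l<dim_row B. A $$ (i,l) * B $$ (l,j))"
  using assms by (simp add: scalar_prod_def lessThan_atLeast0)

lemma mv_idx:
  assumes "dim_vec v = dim_col A" "i < dim_row A"
  shows "(A *\<^sub>v v) $ i = (\<Sum>l<dim_col A. A $$ (i,l) * v $ l)"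
  using assms by (simp add: scalar_prod_def lessThan_atLeast0)

lemma orth_right:
  assumes "orthogonal_mat n U"
  shows "U * transpose_mat U = 1\<^sub>m n"
  using assms mat_mult_left_right_inverse[of "transpose_mat U" n U]
  unfolding orthogonal_mat_def by auto

lemma orth_cols:
  assumes "orthogonal_mat n U" "i < n" "j < n"
  shows "(\<Sum>k<n. U $$ (k,i) * U $$ (k,j)) = (if i = j then 1 else 0)"
proof -
  have "(transpose_mat U * U) $$ (i,j) = (if i = j then 1 else 0)"
    using assms unfolding orthogonal_mat_def by auto
  then show ?thesis using assms unfolding orthogonal_mat_def
    by (subst (asm) mult_idx) auto
qed

lemma orth_rows:
  assumes "orthogonal_mat n U" "i < n" "j < n"
  shows "(\<Sum>k<n. U $$ (i,k) * U $$ (j,k)) = (if i = j then 1 else 0)"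
proof -
  have "(U * transpose_mat U) $$ (i,j) = (if i = j then 1 else 0)"
    using assms orth_right[OF assms(1)] by auto
  then show ?thesis using assms unfolding orthogonal_mat_def
    by (subst (asm) mult_idx) auto
qed

lemma orth_mult:
  assumes "orthogonal_mat n P" "orthogonal_mat n W"
  shows "orthogonal_mat n (P * W)"
proof -
  have P: "P \<in> carrier_mat n n" and W: "W \<in> carrier_mat n n"
    and PP: "transpose_mat P * P = 1\<^sub>m n" and WW: "transpose_mat W * W = 1\<^sub>m n"
    using assms unfolding orthogonal_mat_def by auto
  have "transpose_mat (P * W) * (P * W) = transpose_mat W * (transpose_mat P * P) * W"
    using P W by (simp add: transpose_mult assoc_mult_mat[of _ n n _ n _ n])
  also have "\<dots> = 1\<^sub>m n" using PP WW W by simp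
  finally show ?thesis using P W unfolding orthogonal_mat_def by auto
qed

lemma sum_delta_l: "(\<Sum>k<(n::nat). (if k = i then 1 else 0) * (f k::real)) = (if i < n then f i else 0)"
proof -
  have "(\<Sum>k<n. (if k = i then 1 else 0) * (f k::real)) = (\<Sum>k<n. if k = i then f k else 0)"
    by (intro sum.cong) auto
  then show ?thesis by (simp add: sum.delta)
qed
lemma sum_delta_r: "(\<Sum>k<(n::nat). (f k::real) * (if k = i then 1 else 0)) = (if i < n then f i else 0)"
proof -
  have "(\<Sum>k<n. (f k::real) * (if k = i then 1 else 0)) = (\<Sum>k<n. if k = i then f k else 0)"
    by (intro sum.cong) auto
  then show ?thesis by (simp add: sum.delta)
qed

lemma expand4:
  fixes p q y :: "nat \<Rightarrow> real"
  shows "(\<Sum>k<n. (p k - a*y k)*(q k - b*y k)) = (\<Sum>k<n. p k*q k) - b*(\<Sum>k<n. p k*y k)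
     - a*(\<Sum>k<n. y k*q k) + a*b*(\<Sum>k<n. y k*y k)"
  by (simp add: algebra_simps sum.distrib sum_subtractf sum_distrib_left)

lemma householder:
  fixes u :: "nat \<Rightarrow> real"
  assumes n: "0 < n" and u: "(\<Sum>i<n. u i * u i) = 1"
  shows "\<exists>H. orthogonal_mat n H \<and> (\<forall>i<n. H $$ (i,0) = u i)"
proof (cases "\<forall>i<n. u i = (if i = 0 then 1 else 0)")
  case True
  then show ?thesis unfolding orthogonal_mat_def
    by (intro exI[of _ "1\<^sub>m n"]) (auto simp: n)
next
  case False
  define d :: "nat \<Rightarrow> nat \<Rightarrow> real" where "d i j = (if i = j then 1 else 0)" for i j
  define y where "y i = d i 0 - u i" for i
  define c where "c = (\<Sum>k<n. y k * y k)"
  have c2: "c = 2 * y 0"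
  proof -
    have "c = (\<Sum>k<n. d k 0 * d k 0) - 2 * (\<Sum>k<n. d k 0 * u k) + (\<Sum>k<n. u k * u k)"
      unfolding c_def y_def by (simp add: algebra_simps sum.distrib sum_subtractf sum_distrib_left)
    also have "\<dots> = 1 - 2 * u 0 + 1"
      using n u unfolding d_def by (simp add: sum_delta_l)
    finally show ?thesis unfolding y_def d_def by simp
  qed
  obtain i0 where i0: "i0 < n" "y i0 \<noteq> 0" using False unfolding y_def d_def by auto
  have "c > 0"
  proof -
    have "c \<ge> y i0 * y i0" unfolding c_def
      using i0 by (intro member_le_sum) auto
    moreover have "y i0 * y i0 > 0" using i0 by (auto simp: zero_less_mult_iff linorder_neq_iff)
    ultimately show ?thesis by linarith
  qed
  define H where "H = mat n n (\<lambda>(i,j). d i j - 2 * y i * y j / c)"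
  have Hc: "H \<in> carrier_mat n n" unfolding H_def by auto
  have "transpose_mat H * H = 1\<^sub>m n"
  proof (rule eq_matI)
    fix i j assume ij: "i < dim_row (1\<^sub>m n)" "j < dim_col (1\<^sub>m n)"
    have "(transpose_mat H * H) $$ (i,j) = (\<Sum>k<n. (d k i - (2 * y i / c) * y k) * (d k j - (2 * y j / c) * y k))"
      using ij Hc by (subst mult_idx) (auto simp: H_def mult_ac intro!: sum.cong)
    also have "\<dots> = (\<Sum>k<n. d k i * d k j) - (2 * y j / c) * (\<Sum>k<n. d k i * y k)
       - (2 * y i / c) * (\<Sum>k<n. y k * d k j) + (2 * y i / c) * (2 * y j / c) * c"
      unfolding c_def by (rule expand4)
    also have "\<dots> = d i j"
      using ij \<open>c > 0\<close> unfolding d_def by (simp add: sum_delta_l sum_delta_r)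
    finally show "(transpose_mat H * H) $$ (i,j) = 1\<^sub>m n $$ (i,j)" using ij unfolding d_def by simp
  qed (use Hc in auto)
  moreover have "\<forall>i<n. H $$ (i,0) = u i"
  proof -
    have c': "c = 2 - 2 * u 0" using c2 unfolding y_def d_def by simp
    have "1 - u 0 \<noteq> 0" using \<open>c > 0\<close> c' by simp
    then show ?thesis
      using n unfolding H_def y_def d_def c' by (auto simp: field_simps)
  qed
  ultimately show ?thesis using Hc unfolding orthogonal_mat_def by blast
qed

definition bext :: "real \<Rightarrow> real mat \<Rightarrow> real mat" where
  "bext a X = mat (Suc (dim_row X)) (Suc (dim_col X))
     (\<lambda>(i,j). if i = 0 \<and> j = 0 then a else if i = 0 \<or> j = 0 then 0 else X $$ (i-1, j-1))"

lemma bext_dim[simp]: "dim_row (bext a X) = Suc (dim_row X)" "dim_col (bext a X) = Suc (dim_col X)"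
  unfolding bext_def by auto

lemma bext_idx: "i < Suc (dim_row X) \<Longrightarrow> j < Suc (dim_col X) \<Longrightarrow>
  bext a X $$ (i,j) = (if i = 0 \<and> j = 0 then a else if i = 0 \<or> j = 0 then 0 else X $$ (i-1, j-1))"
  unfolding bext_def by auto

lemma bext_mult:
  assumes "dim_col X = dim_row Y"
  shows "bext a X * bext b Y = bext (a*b) (X*Y)"
proof (rule eq_matI)
  fix i j assume ij: "i < dim_row (bext (a*b) (X*Y))" "j < dim_col (bext (a*b) (X*Y))"
  have "(bext a X * bext b Y) $$ (i,j) = (\<Sum>l<Suc (dim_row Y). bext a X $$ (i,l) * bext b Y $$ (l,j))"
    using ij assms by (subst mult_idx) auto
  also have "\<dots> = bext a X $$ (i,0) * bext b Y $$ (0,j) + (\<Sum>l<dim_row Y. bext a X $$ (i,Suc l) * bext b Y $$ (Suc l,j))"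
    by (rule sum.lessThan_Suc_shift)
  also have "\<dots> = bext (a*b) (X*Y) $$ (i,j)"
  proof (cases "i = 0")
    case True
    then show ?thesis using ij assms by (simp add: bext_idx)
  next
    case False
    then obtain i' where i': "i = Suc i'" by (cases i) auto
    show ?thesis
    proof (cases "j = 0")
      case True
      then show ?thesis using ij assms i' by (simp add: bext_idx)
    next
      case False
      then obtain j' where j': "j = Suc j'" by (cases j) auto
      show ?thesis using ij assms i' j' by (simp add: bext_idx scalar_prod_def lessThan_atLeast0)
    qed
  qed
  finally show "(bext a X * bext b Y) $$ (i,j) = bext (a*b) (X*Y) $$ (i,j)" .
qed (auto)

lemma bext_transpose: "transpose_mat (bext a X) = bext a (transpose_mat X)"
  by (rule eq_matI) (auto simp: bext_idx)

lemma bext_one: "bext 1 (1\<^sub>m r) = 1\<^sub>m (Suc r)"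
  by (rule eq_matI) (auto simp: bext_idx)

lemma orth_bext:
  assumes "orthogonal_mat r W"
  shows "orthogonal_mat (Suc r) (bext 1 W)"
proof -
  have W: "W \<in> carrier_mat r r" "transpose_mat W * W = 1\<^sub>m r" using assms unfolding orthogonal_mat_def by auto
  have "transpose_mat (bext 1 W) * bext 1 W = bext 1 (transpose_mat W * W)"
    using W by (simp add: bext_transpose bext_mult)
  then show ?thesis using W unfolding orthogonal_mat_def by (auto simp: bext_one)
qed

lemma bext_col0:
  assumes "P \<in> carrier_mat (Suc r) (Suc r)" "W \<in> carrier_mat r r" "i < Suc r"
  shows "(P * bext 1 W) $$ (i,0) = P $$ (i,0)"
proof -
  have "(P * bext 1 W) $$ (i,0) = (\<Sum>l<Suc r. P $$ (i,l) * bext 1 W $$ (l,0))"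
    using assms by (subst mult_idx) auto
  also have "\<dots> = P $$ (i,0) * bext 1 W $$ (0,0) + (\<Sum>l<r. P $$ (i,Suc l) * bext 1 W $$ (Suc l,0))"
    by (rule sum.lessThan_Suc_shift)
  also have "\<dots> = P $$ (i,0)" using assms by (simp add: bext_idx)
  finally show ?thesis .
qed

lemma svd_step:
  assumes A: "A \<in> carrier_mat n m" and n: "0 < n" and m: "0 < m"
    and P: "orthogonal_mat n P" and Q: "orthogonal_mat m Q" and s: "s \<ge> 0"
    and C0: "\<forall>j<m. (transpose_mat P * A * Q) $$ (0,j) = (if j = 0 then s else 0)"
    and C0': "\<forall>i<n. (transpose_mat P * A * Q) $$ (i,0) = (if i = 0 then s else 0)"
    and IH: "\<forall>A' \<in> carrier_mat (n-1) (m-1). \<exists>U S V. is_svd A' U S V"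
  shows "\<exists>U S V. is_svd A U S V \<and> (\<forall>i<n. U $$ (i,0) = P $$ (i,0)) \<and>
            (\<forall>j<m. V $$ (j,0) = Q $$ (j,0)) \<and> S $$ (0,0) = s"
proof -
  obtain n' where n': "n = Suc n'" using n by (cases n) auto
  obtain m' where m': "m = Suc m'" using m by (cases m) auto
  have Pc: "P \<in> carrier_mat n n" and Qc: "Q \<in> carrier_mat m m"
    using P Q unfolding orthogonal_mat_def by auto
  define C where "C = transpose_mat P * A * Q"
  have Cc: "C \<in> carrier_mat n m" unfolding C_def using Pc Qc A by auto
  define C' where "C' = mat n' m' (\<lambda>(i,j). C $$ (Suc i, Suc j))"
  have C'c: "C' \<in> carrier_mat n' m'" unfolding C'_def by auto
  have CC': "C = bext s C'"
  proof (rule eq_matI)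
    fix i j assume ij: "i < dim_row (bext s C')" "j < dim_col (bext s C')"
    then have ij': "i < n" "j < m" using n' m' C'c by auto
    show "C $$ (i,j) = bext s C' $$ (i,j)"
    proof (cases "i = 0 \<or> j = 0")
      case True
      then show ?thesis using C0 C0' ij ij' C'c unfolding C_def by (auto simp: bext_idx)
    next
      case False
      then show ?thesis using ij ij' C'c n' m' unfolding C'_def by (auto simp: bext_idx)
    qed
  qed (use Cc C'c n' m' in auto)
  obtain U' S' V' where svd': "is_svd C' U' S' V'" using IH C'c n' m' by auto
  have U': "orthogonal_mat n' U'" and V': "orthogonal_mat m' V'" and S'c: "S' \<in> carrier_mat n' m'"
    and S'd: "\<forall>i<n'. \<forall>j<m'. i \<noteq> j \<longrightarrow> S' $$ (i,j) = 0"
    and S'p: "\<forall>i<min n' m'. S' $$ (i,i) \<ge> 0" and C'eq: "C' = U' * S' * transpose_mat V'"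
    using svd' C'c unfolding is_svd_def by auto
  have U'c: "U' \<in> carrier_mat n' n'" and V'c: "V' \<in> carrier_mat m' m'"
    using U' V' unfolding orthogonal_mat_def by auto
  define U where "U = P * bext 1 U'"
  define S where "S = bext s S'"
  define V where "V = Q * bext 1 V'"
  have Uo: "orthogonal_mat n U" unfolding U_def n' using orth_mult orth_bext[OF U'] P n' by auto
  have Vo: "orthogonal_mat m V" unfolding V_def m' using orth_mult orth_bext[OF V'] Q m' by auto
  have Sc: "S \<in> carrier_mat n m" unfolding S_def using S'c n' m' by auto
  have eU: "bext 1 U' \<in> carrier_mat n n" and eV: "bext 1 V' \<in> carrier_mat m m"
    using U'c V'c n' m' by auto
  have "bext 1 U' * S * transpose_mat (bext 1 V') = bext (1 * s * 1) (U' * S' * transpose_mat V')"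
    unfolding S_def bext_transpose using U'c S'c V'c
    by (simp add: bext_mult)
  then have CUSV: "C = bext 1 U' * S * transpose_mat (bext 1 V')" using CC' C'eq by simp
  have PPt: "P * transpose_mat P = 1\<^sub>m n" using orth_right[OF P] .
  have QQt: "Q * transpose_mat Q = 1\<^sub>m m" using orth_right[OF Q] .
  have "P * C * transpose_mat Q = (P * transpose_mat P) * A * (Q * transpose_mat Q)"
    unfolding C_def using Pc Qc A
    by (simp add: assoc_mult_mat[of _ n n _ n _ m] assoc_mult_mat[of _ n m _ m _ m]
        assoc_mult_mat[of _ n n _ m _ m])
  also have "\<dots> = A" using PPt QQt A by simp
  finally have PCQ: "P * C * transpose_mat Q = A" .
  have "U * S * transpose_mat V = P * (bext 1 U' * S * transpose_mat (bext 1 V')) * transpose_mat Q"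
    unfolding U_def V_def using Pc Qc eU eV Sc
    by (simp add: transpose_mult[of _ m m _ m] assoc_mult_mat[of _ n n _ n _ m] assoc_mult_mat[of _ n n _ m _ m]
        assoc_mult_mat[of _ n m _ m _ m] assoc_mult_mat[of _ n n _ m _ m])
  also have "\<dots> = A" using CUSV PCQ by simp
  finally have USV: "U * S * transpose_mat V = A" .
  have diag: "\<forall>i<n. \<forall>j<m. i \<noteq> j \<longrightarrow> S $$ (i,j) = 0"
  proof (intro allI impI)
    fix i j assume ij: "i < n" "j < m" "i \<noteq> j"
    show "S $$ (i,j) = 0"
    proof (cases "i = 0 \<or> j = 0")
      case True then show ?thesis using ij S'c n' m' unfolding S_def by (auto simp: bext_idx)
    next
      case False then show ?thesis using ij S'c n' m' S'd unfolding S_def by (auto simp: bext_idx)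
    qed
  qed
  have pos: "\<forall>i<min n m. S $$ (i,i) \<ge> 0"
  proof (intro allI impI)
    fix i assume i: "i < min n m"
    show "S $$ (i,i) \<ge> 0"
    proof (cases "i = 0")
      case True then show ?thesis using i S'c n' m' s unfolding S_def by (auto simp: bext_idx)
    next
      case False
      have "i - 1 < n'" "i - 1 < m'" using i n' m' False by auto
      then show ?thesis using i S'c n' m' S'p[rule_format, of "i-1"] False unfolding S_def by (simp add: bext_idx)
    qed
  qed
  have "is_svd A U S V" unfolding is_svd_def using A Uo Vo Sc diag pos USV by auto
  moreover have "\<forall>i<n. U $$ (i,0) = P $$ (i,0)"
    unfolding U_def using bext_col0 Pc U'c n' by auto
  moreover have "\<forall>j<m. V $$ (j,0) = Q $$ (j,0)"
    unfolding V_def using bext_col0 Qc V'c m' by auto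
  moreover have "S $$ (0,0) = s" unfolding S_def using S'c by (auto simp: bext_idx)
  ultimately show ?thesis by blast
qed

lemma triple_idx:
  assumes "P \<in> carrier_mat n a" "X \<in> carrier_mat n m" "Q \<in> carrier_mat m b" "i < a" "j < b"
  shows "(transpose_mat P * X * Q) $$ (i,j) = (\<Sum>k<n. \<Sum>l<m. P $$ (k,i) * X $$ (k,l) * Q $$ (l,j))"
proof -
  have "(transpose_mat P * X * Q) $$ (i,j) = (\<Sum>l<m. (transpose_mat P * X) $$ (i,l) * Q $$ (l,j))"
    using assms by (subst mult_idx) auto
  also have "\<dots> = (\<Sum>l<m. (\<Sum>k<n. P $$ (k,i) * X $$ (k,l)) * Q $$ (l,j))"
    using assms by (intro sum.cong refl, subst mult_idx) auto
  also have "\<dots> = (\<Sum>k<n. \<Sum>l<m. P $$ (k,i) * X $$ (k,l) * Q $$ (l,j))"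
    by (simp add: sum_distrib_right sum.swap[of _ "{..<m}"])
  finally show ?thesis .
qed

lemma triple_idx2:
  assumes "U \<in> carrier_mat a n" "X \<in> carrier_mat n m" "V \<in> carrier_mat b m" "i < a" "j < b"
  shows "(U * X * transpose_mat V) $$ (i,j) = (\<Sum>k<n. \<Sum>l<m. U $$ (i,k) * X $$ (k,l) * V $$ (j,l))"
proof -
  have "(U * X * transpose_mat V) $$ (i,j) = (\<Sum>l<m. (U * X) $$ (i,l) * V $$ (j,l))"
    using assms by (subst mult_idx) auto
  also have "\<dots> = (\<Sum>l<m. (\<Sum>k<n. U $$ (i,k) * X $$ (k,l)) * V $$ (j,l))"
    using assms by (intro sum.cong refl, subst mult_idx) auto
  also have "\<dots> = (\<Sum>k<n. \<Sum>l<m. U $$ (i,k) * X $$ (k,l) * V $$ (j,l))"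
    by (simp add: sum_distrib_right sum.swap[of _ "{..<m}"])
  finally show ?thesis .
qed

lemma triple_C:
  fixes u v :: "nat \<Rightarrow> real"
  assumes A: "A \<in> carrier_mat n m" and P: "orthogonal_mat n P" and Q: "orthogonal_mat m Q"
    and n: "0 < n" and m: "0 < m"
    and Pu: "\<forall>i<n. P $$ (i,0) = u i" and Qv: "\<forall>j<m. Q $$ (j,0) = v j"
    and Av: "\<forall>i<n. (\<Sum>l<m. A $$ (i,l) * v l) = s * u i"
    and Atu: "\<forall>j<m. (\<Sum>k<n. A $$ (k,j) * u k) = s * v j"
  shows "\<forall>j<m. (transpose_mat P * A * Q) $$ (0,j) = (if j = 0 then s else 0)"
    and "\<forall>i<n. (transpose_mat P * A * Q) $$ (i,0) = (if i = 0 then s else 0)"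
proof -
  have Pc: "P \<in> carrier_mat n n" and Qc: "Q \<in> carrier_mat m m"
    using P Q unfolding orthogonal_mat_def by auto
  show "\<forall>j<m. (transpose_mat P * A * Q) $$ (0,j) = (if j = 0 then s else 0)"
  proof (intro allI impI)
    fix j assume j: "j < m"
    have "(transpose_mat P * A * Q) $$ (0,j) = (\<Sum>k<n. \<Sum>l<m. P $$ (k,0) * A $$ (k,l) * Q $$ (l,j))"
      using triple_idx[OF Pc A Qc n j] .
    also have "\<dots> = (\<Sum>k<n. \<Sum>l<m. u k * A $$ (k,l) * Q $$ (l,j))"
      using Pu by (intro sum.cong) auto
    also have "\<dots> = (\<Sum>l<m. (\<Sum>k<n. A $$ (k,l) * u k) * Q $$ (l,j))"
      by (subst sum.swap) (simp add: sum_distrib_right sum_distrib_left mult_ac)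
    also have "\<dots> = (\<Sum>l<m. s * (Q $$ (l,0) * Q $$ (l,j)))"
      using Atu Qv by (intro sum.cong) auto
    also have "\<dots> = s * (if 0 = j then 1 else 0)"
      by (simp add: sum_distrib_left[symmetric] orth_cols[OF Q m j])
    finally show "(transpose_mat P * A * Q) $$ (0,j) = (if j = 0 then s else 0)" by auto
  qed
  show "\<forall>i<n. (transpose_mat P * A * Q) $$ (i,0) = (if i = 0 then s else 0)"
  proof (intro allI impI)
    fix i assume i: "i < n"
    have "(transpose_mat P * A * Q) $$ (i,0) = (\<Sum>k<n. \<Sum>l<m. P $$ (k,i) * A $$ (k,l) * Q $$ (l,0))"
      using triple_idx[OF Pc A Qc i m] .
    also have "\<dots> = (\<Sum>k<n. P $$ (k,i) * (\<Sum>l<m. A $$ (k,l) * v l))"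
      using Qv by (simp add: sum_distrib_left mult_ac)
    also have "\<dots> = (\<Sum>k<n. s * (P $$ (k,i) * P $$ (k,0)))"
      using Av Pu by (intro sum.cong) auto
    also have "\<dots> = s * (if i = 0 then 1 else 0)"
      by (simp add: sum_distrib_left[symmetric] orth_cols[OF P i n])
    finally show "(transpose_mat P * A * Q) $$ (i,0) = (if i = 0 then s else 0)" by auto
  qed
qed

lemma svd_with_triple:
  fixes u v :: "nat \<Rightarrow> real"
  assumes A: "A \<in> carrier_mat n m"
    and u: "(\<Sum>i<n. u i * u i) = 1" and v: "(\<Sum>j<m. v j * v j) = 1" and s: "s \<ge> 0"
    and Av: "\<forall>i<n. (\<Sum>l<m. A $$ (i,l) * v l) = s * u i"
    and Atu: "\<forall>j<m. (\<Sum>k<n. A $$ (k,j) * u k) = s * v j"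
    and IH: "\<forall>A' \<in> carrier_mat (n-1) (m-1). \<exists>U S V. is_svd A' U S V"
  shows "\<exists>U S V. is_svd A U S V \<and> (\<forall>i<n. U $$ (i,0) = u i) \<and>
            (\<forall>j<m. V $$ (j,0) = v j) \<and> S $$ (0,0) = s"
proof -
  have n: "0 < n" using u by (cases n) auto
  have m: "0 < m" using v by (cases m) auto
  obtain P where P: "orthogonal_mat n P" "\<forall>i<n. P $$ (i,0) = u i" using householder[OF n u] by blast
  obtain Q where Q: "orthogonal_mat m Q" "\<forall>j<m. Q $$ (j,0) = v j" using householder[OF m v] by blast
  note C = triple_C[OF A P(1) Q(1) n m P(2) Q(2) Av Atu]
  from svd_step[OF A n m P(1) Q(1) s C IH] show ?thesis using P(2) Q(2) by auto
qed

lemma sym_eigen: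
  fixes M :: "real mat"
  assumes M: "M \<in> carrier_mat m m" and m: "0 < m"
    and sym: "\<forall>i<m. \<forall>j<m. M $$ (i,j) = M $$ (j,i)"
  shows "\<exists>(x :: nat \<Rightarrow> real) lam. (\<exists>i<m. x i \<noteq> 0) \<and> (\<forall>i<m. (\<Sum>j<m. M $$ (i,j) * x j) = lam * x i)"
proof -
  define Mc where "Mc = map_mat complex_of_real M"
  have Mc: "Mc \<in> carrier_mat m m" unfolding Mc_def using M by auto
  obtain as where as: "char_poly Mc = (\<Prod>a\<leftarrow>as. [:- a, 1:])" "length as = m"
    using char_poly_factorized[OF Mc] by blast
  obtain a rest where ar: "as = a # rest" using as(2) m by (cases as) auto
  have "poly (char_poly Mc) a = 0" unfolding as(1) ar by (simp add: poly_prod_list)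
  then have "eigenvalue Mc a" using eigenvalue_root_char_poly[OF Mc] by simp
  then obtain x where x: "x \<in> carrier_vec m" "x \<noteq> 0\<^sub>v m" "Mc *\<^sub>v x = a \<cdot>\<^sub>v x"
    unfolding eigenvalue_def eigenvector_def using Mc by auto
  have ev: "\<forall>i<m. (\<Sum>j<m. complex_of_real (M $$ (i,j)) * x $ j) = a * x $ i"
  proof (intro allI impI)
    fix i assume i: "i < m"
    have "(Mc *\<^sub>v x) $ i = (a \<cdot>\<^sub>v x) $ i" using x(3) by simp
    then show "(\<Sum>j<m. complex_of_real (M $$ (i,j)) * x $ j) = a * x $ i"
      using i x(1) Mc M by (subst (asm) mv_idx) (auto simp: Mc_def)
  qed
  define q where "q = (\<Sum>i<m. cnj (x $ i) * (\<Sum>j<m. complex_of_real (M $$ (i,j)) * x $ j))"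
  define r where "r = (\<Sum>i<m. (cmod (x $ i))\<^sup>2)"
  have q1: "q = a * complex_of_real r"
  proof -
    have "q = (\<Sum>i<m. a * (cnj (x $ i) * x $ i))" unfolding q_def using ev by (intro sum.cong) auto
    also have "\<dots> = a * (\<Sum>i<m. x $ i * cnj (x $ i))"
      by (simp add: sum_distrib_left mult_ac)
    also have "(\<Sum>i<m. x $ i * cnj (x $ i)) = complex_of_real r" unfolding r_def of_real_sum
      by (simp only: complex_norm_square)
    finally show ?thesis .
  qed
  have "cnj q = (\<Sum>i<m. x $ i * (\<Sum>j<m. complex_of_real (M $$ (i,j)) * cnj (x $ j)))"
    unfolding q_def by (simp add: cnj_sum)
  also have "\<dots> = (\<Sum>i<m. \<Sum>j<m. x $ i * complex_of_real (M $$ (i,j)) * cnj (x $ j))"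
    by (simp add: sum_distrib_left mult_ac)
  also have "\<dots> = (\<Sum>j<m. \<Sum>i<m. x $ i * complex_of_real (M $$ (i,j)) * cnj (x $ j))"
    by (rule sum.swap)
  also have "\<dots> = q" unfolding q_def using sym
    by (auto simp: sum_distrib_left mult_ac intro!: sum.cong)
  finally have "cnj q = q" .
  then have Imq: "Im q = 0" by (metis Reals_cnj_iff complex_is_Real_iff)
  obtain i0 where i0: "i0 < m" "x $ i0 \<noteq> 0" using x(1,2) by (metis carrier_vecD eq_vecI index_zero_vec(1) index_zero_vec(2))
  have "r > 0"
  proof -
    have "r \<ge> (cmod (x $ i0))\<^sup>2" unfolding r_def using i0 by (intro member_le_sum) auto
    moreover have "(cmod (x $ i0))\<^sup>2 > 0" using i0 by simp
    ultimately show ?thesis by linarith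
  qed
  have Ima: "Im a = 0" using Imq q1 \<open>r > 0\<close> by simp
  have evR: "\<forall>i<m. (\<Sum>j<m. M $$ (i,j) * Re (x $ j)) = Re a * Re (x $ i)"
  proof (intro allI impI)
    fix i assume "i < m"
    then have "Re (\<Sum>j<m. complex_of_real (M $$ (i,j)) * x $ j) = Re (a * x $ i)" using ev by simp
    then show "(\<Sum>j<m. M $$ (i,j) * Re (x $ j)) = Re a * Re (x $ i)" using Ima by (simp add: Re_sum)
  qed
  have evI: "\<forall>i<m. (\<Sum>j<m. M $$ (i,j) * Im (x $ j)) = Re a * Im (x $ i)"
  proof (intro allI impI)
    fix i assume "i < m"
    then have "Im (\<Sum>j<m. complex_of_real (M $$ (i,j)) * x $ j) = Im (a * x $ i)" using ev by simp
    then show "(\<Sum>j<m. M $$ (i,j) * Im (x $ j)) = Re a * Im (x $ i)" using Ima by (simp add: Im_sum)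
  qed
  show ?thesis
  proof (cases "Re (x $ i0) = 0")
    case True
    then have "Im (x $ i0) \<noteq> 0" using i0 complex_eq_iff by force
    then show ?thesis using evI i0 by (intro exI[of _ "\<lambda>j. Im (x $ j)"] exI[of _ "Re a"]) auto
  next
    case False
    then show ?thesis using evR i0 by (intro exI[of _ "\<lambda>j. Re (x $ j)"] exI[of _ "Re a"]) auto
  qed
qed

lemma recon:
  fixes g :: "nat \<Rightarrow> real"
  assumes Q: "orthogonal_mat m Q" and j: "j < m"
  shows "(\<Sum>c<m. Q $$ (j,c) * (\<Sum>k<m. Q $$ (k,c) * g k)) = g j"
proof -
  have "(\<Sum>c<m. Q $$ (j,c) * (\<Sum>k<m. Q $$ (k,c) * g k)) = (\<Sum>c<m. \<Sum>k<m. Q $$ (j,c) * Q $$ (k,c) * g k)"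
    by (simp add: sum_distrib_left mult_ac)
  also have "\<dots> = (\<Sum>k<m. (\<Sum>c<m. Q $$ (j,c) * Q $$ (k,c)) * g k)"
    by (subst sum.swap) (simp add: sum_distrib_right)
  also have "\<dots> = (\<Sum>k<m. (if k = j then 1 else 0) * g k)"
    using orth_rows[OF Q j] by (intro sum.cong) auto
  also have "\<dots> = g j" using j by (simp add: sum_delta_l)
  finally show ?thesis .
qed

lemma norm_pres:
  fixes w :: "nat \<Rightarrow> real"
  assumes Q: "orthogonal_mat n Q" and nm: "n = Suc m'"
  shows "(\<Sum>j<n. (\<Sum>l<m'. Q $$ (j, Suc l) * w l) * (\<Sum>l<m'. Q $$ (j, Suc l) * w l))
     = (\<Sum>l<m'. w l * w l)"
proof -
  have "(\<Sum>j<n. (\<Sum>l<m'. Q $$ (j, Suc l) * w l) * (\<Sum>l<m'. Q $$ (j, Suc l) * w l))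
     = (\<Sum>j<n. \<Sum>l<m'. \<Sum>l'<m'. Q $$ (j, Suc l) * Q $$ (j, Suc l') * (w l * w l'))"
    by (simp add: sum_distrib_left sum_distrib_right mult_ac)
  also have "\<dots> = (\<Sum>l<m'. \<Sum>j<n. \<Sum>l'<m'. Q $$ (j, Suc l) * Q $$ (j, Suc l') * (w l * w l'))"
    by (rule sum.swap)
  also have "\<dots> = (\<Sum>l<m'. \<Sum>l'<m'. \<Sum>j<n. Q $$ (j, Suc l) * Q $$ (j, Suc l') * (w l * w l'))"
    by (rule sum.cong[OF refl], rule sum.swap)
  also have "\<dots> = (\<Sum>l<m'. \<Sum>l'<m'. (\<Sum>j<n. Q $$ (j, Suc l) * Q $$ (j, Suc l')) * (w l * w l'))"
    by (simp add: sum_distrib_right)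
  also have "\<dots> = (\<Sum>l<m'. \<Sum>l'<m'. (if l' = l then 1 else 0) * (w l * w l'))"
    using orth_cols[OF Q] nm by (intro sum.cong refl) auto
  also have "\<dots> = (\<Sum>l<m'. w l * w l)"
    by (intro sum.cong refl) (simp add: sum_delta_l)
  finally show ?thesis .
qed

lemma sum_sq_zero:
  fixes y :: "nat \<Rightarrow> real"
  assumes "(\<Sum>k<n. y k * y k) \<le> 0" "k < n"
  shows "y k = 0"
proof -
  have "(\<Sum>k<n. y k * y k) = 0" using assms(1) by (meson antisym sum_nonneg zero_le_square)
  then have "\<forall>k\<in>{..<n}. y k * y k = 0" by (subst (asm) sum_nonneg_eq_0_iff) auto
  then show ?thesis using assms(2) by auto
qed

lemma triple_exists:
  fixes A :: "real mat"
  shows "A \<in> carrier_mat n m \<Longrightarrow> A \<noteq> 0\<^sub>m n m \<Longrightarrow> \<exists>u v s. s > 0 \<and> (\<Sum>i<n. u i * u i) = 1 \<and>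
    (\<Sum>j<m. v j * v j) = 1 \<and> (\<forall>i<n. (\<Sum>l<m. A $$ (i,l) * v l) = s * u i) \<and>
    (\<forall>j<m. (\<Sum>k<n. A $$ (k,j) * u k) = s * v j)"
proof (induction m arbitrary: A rule: less_induct)
  case (less m A)
  have Ac: "A \<in> carrier_mat n m" and A0: "A \<noteq> 0\<^sub>m n m" using less.prems by auto
  have m: "0 < m"
  proof (rule ccontr)
    assume "\<not> 0 < m"
    then have "A = 0\<^sub>m n m" using Ac by (intro eq_matI) auto
    then show False using A0 by simp
  qed
  define M where "M = mat m m (\<lambda>(i,j). \<Sum>k<n. A $$ (k,i) * A $$ (k,j))"
  have Mc: "M \<in> carrier_mat m m" unfolding M_def by auto
  have Msym: "\<forall>i<m. \<forall>j<m. M $$ (i,j) = M $$ (j,i)" unfolding M_def by (auto simp: mult.commute)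
  obtain x lam where x: "\<exists>i<m. x i \<noteq> 0" "\<forall>i<m. (\<Sum>j<m. M $$ (i,j) * x j) = lam * x i"
    using sym_eigen[OF Mc m Msym] by blast
  define y where "y k = (\<Sum>j<m. A $$ (k,j) * x j)" for k
  define N where "N = (\<Sum>j<m. x j * x j)"
  have N: "N > 0"
  proof -
    obtain i0 where i0: "i0 < m" "x i0 \<noteq> 0" using x(1) by blast
    have "N \<ge> x i0 * x i0" unfolding N_def using i0 by (intro member_le_sum) auto
    moreover have "x i0 * x i0 > 0" using i0 by (auto simp: zero_less_mult_iff linorder_neq_iff)
    ultimately show ?thesis by linarith
  qed
  have Aty: "\<forall>i<m. (\<Sum>k<n. A $$ (k,i) * y k) = lam * x i"
  proof (intro allI impI)
    fix i assume i: "i < m"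
    have "(\<Sum>k<n. A $$ (k,i) * y k) = (\<Sum>k<n. \<Sum>j<m. A $$ (k,i) * A $$ (k,j) * x j)"
      unfolding y_def by (simp add: sum_distrib_left mult_ac)
    also have "\<dots> = (\<Sum>j<m. (\<Sum>k<n. A $$ (k,i) * A $$ (k,j)) * x j)"
      by (subst sum.swap) (simp add: sum_distrib_right)
    also have "\<dots> = (\<Sum>j<m. M $$ (i,j) * x j)"
      using i unfolding M_def by (intro sum.cong) auto
    finally show "(\<Sum>k<n. A $$ (k,i) * y k) = lam * x i" using x(2) i by simp
  qed
  have yy: "(\<Sum>k<n. y k * y k) = lam * N"
  proof -
    have "(\<Sum>k<n. y k * y k) = (\<Sum>k<n. \<Sum>j<m. x j * (A $$ (k,j) * y k))"
      unfolding y_def by (simp add: sum_distrib_right mult_ac)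
    also have "\<dots> = (\<Sum>j<m. x j * (\<Sum>k<n. A $$ (k,j) * y k))"
      by (subst sum.swap) (simp add: sum_distrib_left)
    also have "\<dots> = (\<Sum>j<m. lam * (x j * x j))"
      using Aty by (intro sum.cong) auto
    finally show ?thesis unfolding N_def by (simp add: sum_distrib_left)
  qed
  show ?case
  proof (cases "lam > 0")
    case True
    define s where "s = sqrt lam"
    have s: "s > 0" "s * s = lam" unfolding s_def using True by auto
    define sN where "sN = sqrt N"
    have sN: "sN > 0" "sN * sN = N" unfolding sN_def using N by auto
    define v where "v j = x j / sN" for j
    define u where "u k = y k / (sN * s)" for k
    have "(\<Sum>j<m. v j * v j) = N / (sN * sN)" unfolding v_def N_def by (simp add: sum_divide_distrib)
    then have v1: "(\<Sum>j<m. v j * v j) = 1" using sN N by simp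
    have "(\<Sum>i<n. u i * u i) = lam * N / ((sN * s) * (sN * s))"
      unfolding u_def using yy by (simp add: sum_divide_distrib[symmetric])
    also have "\<dots> = 1" using s sN N True by (simp add: field_simps)
    finally have u1: "(\<Sum>i<n. u i * u i) = 1" .
    have Av: "\<forall>i<n. (\<Sum>l<m. A $$ (i,l) * v l) = s * u i"
      using s sN unfolding v_def u_def y_def by (simp add: sum_divide_distrib[symmetric] field_simps)
    have Atu: "\<forall>j<m. (\<Sum>k<n. A $$ (k,j) * u k) = s * v j"
    proof (intro allI impI)
      fix j assume j: "j < m"
      have "(\<Sum>k<n. A $$ (k,j) * u k) = (\<Sum>k<n. A $$ (k,j) * y k) / (sN * s)"
        unfolding u_def by (simp add: sum_divide_distrib)
      also have "\<dots> = s * v j" using Aty j s sN unfolding v_def by (simp add: field_simps)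
      finally show "(\<Sum>k<n. A $$ (k,j) * u k) = s * v j" .
    qed
    show ?thesis using s u1 v1 Av Atu by blast
  next
    case False
    have y0: "\<forall>k<n. y k = 0"
    proof (intro allI impI)
      fix k assume "k < n"
      moreover have "(\<Sum>k<n. y k * y k) \<le> 0" using yy False N by (simp add: mult_nonpos_nonneg)
      ultimately show "y k = 0" using sum_sq_zero by blast
    qed
    define sN where "sN = sqrt N"
    have sN: "sN > 0" "sN * sN = N" unfolding sN_def using N by auto
    define v0 where "v0 j = x j / sN" for j
    have "(\<Sum>j<m. v0 j * v0 j) = N / (sN * sN)" unfolding v0_def N_def by (simp add: sum_divide_distrib)
    then have v01: "(\<Sum>j<m. v0 j * v0 j) = 1" using sN N by simp
    obtain Q where Q: "orthogonal_mat m Q" "\<forall>j<m. Q $$ (j,0) = v0 j" using householder[OF m v01] by blast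
    obtain m' where m': "m = Suc m'" using m by (cases m) auto
    have AQ0: "\<forall>i<n. (\<Sum>j<m. A $$ (i,j) * Q $$ (j,0)) = 0"
    proof (intro allI impI)
      fix i assume i: "i < n"
      have "(\<Sum>j<m. A $$ (i,j) * Q $$ (j,0)) = y i / sN"
        using Q(2) unfolding y_def v0_def by (simp add: sum_divide_distrib)
      then show "(\<Sum>j<m. A $$ (i,j) * Q $$ (j,0)) = 0" using y0 i by simp
    qed
    define A2 where "A2 = mat n m' (\<lambda>(i,l). \<Sum>j<m. A $$ (i,j) * Q $$ (j, Suc l))"
    have A2c: "A2 \<in> carrier_mat n m'" unfolding A2_def by auto
    have A2nz: "A2 \<noteq> 0\<^sub>m n m'"
    proof
      assume Z: "A2 = 0\<^sub>m n m'"
      have AQ: "\<forall>i<n. \<forall>c<m. (\<Sum>j<m. A $$ (i,j) * Q $$ (j,c)) = 0"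
      proof (intro allI impI)
        fix i c assume i: "i < n" and c: "c < m"
        show "(\<Sum>j<m. A $$ (i,j) * Q $$ (j,c)) = 0"
        proof (cases c)
          case 0 then show ?thesis using AQ0 i by simp
        next
          case (Suc l)
          have "A2 $$ (i,l) = 0" using Z i c Suc m' by simp
          then show ?thesis using i c Suc m' unfolding A2_def by simp
        qed
      qed
      have "A = 0\<^sub>m n m"
      proof (rule eq_matI)
        fix i j assume ij: "i < dim_row (0\<^sub>m n m)" "j < dim_col (0\<^sub>m n m)"
        have "A $$ (i,j) = (\<Sum>c<m. Q $$ (j,c) * (\<Sum>k<m. Q $$ (k,c) * A $$ (i,k)))"
          using recon[OF Q(1), of j "\<lambda>k. A $$ (i,k)"] ij by simp
        also have "\<dots> = 0" using AQ ij by (simp add: mult.commute)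
        finally show "A $$ (i,j) = 0\<^sub>m n m $$ (i,j)" using ij by simp
      qed (use Ac in auto)
      then show False using A0 by simp
    qed
    have "m' < m" using m' by simp
    from less.IH[OF this A2c A2nz] obtain u v2 s where
      IH: "s > 0" "(\<Sum>i<n. u i * u i) = 1" "(\<Sum>j<m'. v2 j * v2 j) = 1"
        "\<forall>i<n. (\<Sum>l<m'. A2 $$ (i,l) * v2 l) = s * u i"
        "\<forall>j<m'. (\<Sum>k<n. A2 $$ (k,j) * u k) = s * v2 j" by blast
    define v where "v j = (\<Sum>l<m'. Q $$ (j, Suc l) * v2 l)" for j
    have v1: "(\<Sum>j<m. v j * v j) = 1" unfolding v_def using norm_pres[OF Q(1) m', of v2] IH(3) by simp
    have Av: "\<forall>i<n. (\<Sum>l<m. A $$ (i,l) * v l) = s * u i"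
    proof (intro allI impI)
      fix i assume i: "i < n"
      have "(\<Sum>l<m. A $$ (i,l) * v l) = (\<Sum>l<m. \<Sum>l'<m'. A $$ (i,l) * Q $$ (l, Suc l') * v2 l')"
        unfolding v_def by (simp add: sum_distrib_left mult_ac)
      also have "\<dots> = (\<Sum>l'<m'. (\<Sum>l<m. A $$ (i,l) * Q $$ (l, Suc l')) * v2 l')"
        by (subst sum.swap) (simp add: sum_distrib_right)
      also have "\<dots> = (\<Sum>l'<m'. A2 $$ (i,l') * v2 l')"
        using i unfolding A2_def by (intro sum.cong) auto
      finally show "(\<Sum>l<m. A $$ (i,l) * v l) = s * u i" using IH(4) i by simp
    qed
    have Atu: "\<forall>j<m. (\<Sum>k<n. A $$ (k,j) * u k) = s * v j"
    proof (intro allI impI)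
      fix j assume j: "j < m"
      define g where "g j' = (\<Sum>k<n. A $$ (k,j') * u k)" for j'
      define h where "h c = (\<Sum>k'<m. Q $$ (k',c) * g k')" for c
      have h: "h c = (\<Sum>k<n. u k * (\<Sum>k'<m. A $$ (k,k') * Q $$ (k',c)))" for c
      proof -
        have "h c = (\<Sum>k'<m. \<Sum>k<n. u k * (A $$ (k,k') * Q $$ (k',c)))"
          unfolding h_def g_def by (simp add: sum_distrib_left mult_ac)
        also have "\<dots> = (\<Sum>k<n. u k * (\<Sum>k'<m. A $$ (k,k') * Q $$ (k',c)))"
          by (subst sum.swap) (simp add: sum_distrib_left)
        finally show ?thesis .
      qed
      have h0: "h 0 = 0" unfolding h using AQ0 by simp
      have hS: "h (Suc l) = s * v2 l" if l: "l < m'" for l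
      proof -
        have "h (Suc l) = (\<Sum>k<n. A2 $$ (k,l) * u k)"
          unfolding h using l unfolding A2_def by (intro sum.cong) auto
        then show ?thesis using IH(5) l by simp
      qed
      have "g j = (\<Sum>c<m. Q $$ (j,c) * h c)" unfolding h_def using recon[OF Q(1) j, of g] by simp
      also have "\<dots> = (\<Sum>c<Suc m'. Q $$ (j,c) * h c)" using m' by simp
      also have "\<dots> = Q $$ (j,0) * h 0 + (\<Sum>l<m'. Q $$ (j,Suc l) * h (Suc l))"
        by (rule sum.lessThan_Suc_shift)
      also have "\<dots> = (\<Sum>l<m'. Q $$ (j,Suc l) * (s * v2 l))"
        using h0 hS by simp
      also have "\<dots> = s * v j" unfolding v_def by (simp add: sum_distrib_left mult_ac)
      finally show "(\<Sum>k<n. A $$ (k,j) * u k) = s * v j" unfolding g_def .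
    qed
    show ?thesis using IH(1,2) v1 Av Atu by blast
  qed
qed

lemma svd_exists:
  fixes A :: "real mat"
  shows "A \<in> carrier_mat n m \<Longrightarrow> \<exists>U S V. is_svd A U S V"
proof (induction m arbitrary: n A rule: less_induct)
  case (less m n A)
  show ?case
  proof (cases "A = 0\<^sub>m n m")
    case True
    have "is_svd A (1\<^sub>m n) (0\<^sub>m n m) (1\<^sub>m m)"
      unfolding is_svd_def orthogonal_mat_def using True less.prems by auto
    then show ?thesis by blast
  next
    case False
    from triple_exists[OF less.prems False] obtain u v s where
      T: "s > 0" "(\<Sum>i<n. u i * u i) = 1" "(\<Sum>j<m. v j * v j) = 1"
        "\<forall>i<n. (\<Sum>l<m. A $$ (i,l) * v l) = s * u i"
        "\<forall>j<m. (\<Sum>k<n. A $$ (k,j) * u k) = s * v j" by blast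
    have m: "0 < m" using T(3) by (cases m) auto
    have IH: "\<forall>A' \<in> carrier_mat (n-1) (m-1). \<exists>U S V. is_svd A' U S V"
      using less.IH[of "m-1"] m by auto
    from svd_with_triple[OF less.prems T(2) T(3) _ T(4) T(5) IH] T(1) show ?thesis by auto
  qed
qed


lemma gram_side:
  fixes w z :: "nat \<Rightarrow> real"
  assumes A: "A \<in> carrier_mat n m" and D: "D \<in> carrier_mat n m"
    and Dw: "\<forall>i<n. \<forall>j<m. D $$ (i,j) = c * w i * z j" and c: "c * c = 1"
    and n: "0 < n" and w0: "w 0 = 1"
  shows "(A * transpose_mat A = (A - D) * transpose_mat (A - D)) \<longleftrightarrow>
         (\<forall>i<n. (\<Sum>l<m. A $$ (i,l) * z l) = c * w i * (\<Sum>l<m. z l * z l) / 2)"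
proof -
  define a where "a i = (\<Sum>l<m. A $$ (i,l) * z l)" for i
  define Z where "Z = (\<Sum>l<m. z l * z l)"
  have ent: "((A - D) * transpose_mat (A - D)) $$ (i,j) =
     (A * transpose_mat A) $$ (i,j) - (c * w j) * a i - (c * w i) * a j + (c * w i) * (c * w j) * Z"
    if ij: "i < n" "j < n" for i j
  proof -
    have "((A - D) * transpose_mat (A - D)) $$ (i,j) = (\<Sum>l<m. (A $$ (i,l) - (c * w i) * z l) * (A $$ (j,l) - (c * w j) * z l))"
      using A D ij Dw by (subst mult_idx) (auto intro!: sum.cong)
    also have "\<dots> = (\<Sum>l<m. A $$ (i,l) * A $$ (j,l)) - (c * w j) * a i - (c * w i) * (\<Sum>l<m. z l * A $$ (j,l)) + (c * w i) * (c * w j) * Z"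
      unfolding a_def Z_def by (rule expand4)
    also have "(\<Sum>l<m. z l * A $$ (j,l)) = a j" unfolding a_def by (simp add: mult.commute)
    also have "(\<Sum>l<m. A $$ (i,l) * A $$ (j,l)) = (A * transpose_mat A) $$ (i,j)"
      using A ij by (subst mult_idx) auto
    finally show ?thesis .
  qed
  have "(A * transpose_mat A = (A - D) * transpose_mat (A - D)) \<longleftrightarrow>
     (\<forall>i<n. \<forall>j<n. (A * transpose_mat A) $$ (i,j) = ((A - D) * transpose_mat (A - D)) $$ (i,j))"
    using A D by (auto simp: mat_eq_iff)
  also have "\<dots> \<longleftrightarrow> (\<forall>i<n. \<forall>j<n. (c * w j) * a i + (c * w i) * a j = (c * w i) * (c * w j) * Z)"
  proof (intro iffI allI impI)
    fix i j assume H: "\<forall>i<n. \<forall>j<n. (A * transpose_mat A) $$ (i,j) = ((A - D) * transpose_mat (A - D)) $$ (i,j)"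
      and ij: "i < n" "j < n"
    show "(c * w j) * a i + (c * w i) * a j = (c * w i) * (c * w j) * Z"
      using H[rule_format, OF ij] ent[OF ij] by linarith
  next
    fix i j assume H: "\<forall>i<n. \<forall>j<n. (c * w j) * a i + (c * w i) * a j = (c * w i) * (c * w j) * Z"
      and ij: "i < n" "j < n"
    show "(A * transpose_mat A) $$ (i,j) = ((A - D) * transpose_mat (A - D)) $$ (i,j)"
      using H[rule_format, OF ij] ent[OF ij] by linarith
  qed
  also have "\<dots> \<longleftrightarrow> (\<forall>i<n. a i = c * w i * Z / 2)"
  proof
    assume H: "\<forall>i<n. \<forall>j<n. (c * w j) * a i + (c * w i) * a j = (c * w i) * (c * w j) * Z"
    have "c * a 0 + c * a 0 = c * c * Z" using H[rule_format, of 0 0] n w0 by (simp add: mult_ac)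
    moreover have "c * c * Z = Z" using c by simp
    ultimately have e: "Z = 2 * (c * a 0)" by linarith
    have "c * Z = 2 * (c * c) * a 0" unfolding e by (simp add: algebra_simps)
    then have a0: "a 0 = c * Z / 2" using c by simp
    show "\<forall>i<n. a i = c * w i * Z / 2"
    proof (intro allI impI)
      fix i assume i: "i < n"
      have "c * a i + c * w i * a 0 = c * w i * c * Z" using H[rule_format, of i 0] n w0 i by (simp add: mult_ac)
      then have "c * (c * a i + c * w i * a 0) = c * (c * w i * c * Z)" by simp
      then have "(c * c) * a i + (c * c) * w i * a 0 = (c * c) * c * w i * Z" by (simp add: algebra_simps)
      then have "a i + w i * a 0 = c * w i * Z" using c by simp
      then have "a i + (c * w i * Z) / 2 = c * w i * Z" using a0 by (simp add: mult_ac)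
      then show "a i = c * w i * Z / 2" by linarith
    qed
  next
    assume H: "\<forall>i<n. a i = c * w i * Z / 2"
    show "\<forall>i<n. \<forall>j<n. (c * w j) * a i + (c * w i) * a j = (c * w i) * (c * w j) * Z"
    proof (intro allI impI)
      fix i j assume ij: "i < n" "j < n"
      have ai: "a i = c * w i * Z / 2" "a j = c * w j * Z / 2" using H ij by auto
      have "(c * w j) * a i + (c * w i) * a j = (c * w j) * (c * w i * Z / 2) + (c * w i) * (c * w j * Z / 2)"
        by (simp only: ai)
      also have "\<dots> = c * c * (w i * w j * Z)" by (simp add: algebra_simps)
      finally have "(c * w j) * a i + (c * w i) * a j = c * c * (w i * w j * Z)" .
      then show "(c * w j) * a i + (c * w i) * a j = (c * w i) * (c * w j) * Z" using c by (simp add: algebra_simps)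
    qed
  qed
  finally show ?thesis unfolding a_def Z_def .
qed

definition wv :: "nat \<Rightarrow> nat \<Rightarrow> real" where
  "wv k i = (if blk k i = 0 then 1 else if blk k i = 1 then -1 else 0)"

lemma E_carrier: "E_mat k1 k2 p q \<in> carrier_mat (2*k1+p) (2*k2+q)"
  unfolding E_mat_def by auto

lemma E_idx: "i < 2*k1+p \<Longrightarrow> j < 2*k2+q \<Longrightarrow> E_mat k1 k2 p q $$ (i,j) = wv k1 i * wv k2 j"
  unfolding E_mat_def wv_def blk_def by auto

lemma wv0: "0 < k \<Longrightarrow> wv k 0 = 1" unfolding wv_def blk_def by auto

lemma sum_split3:
  fixes f :: "nat \<Rightarrow> real"
  shows "(\<Sum>i<2*k+p. f i) = (\<Sum>i<k. f i) + (\<Sum>i\<in>{k..<2*k}. f i) + (\<Sum>i\<in>{2*k..<2*k+p}. f i)"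
proof -
  have "(\<Sum>i<2*k+p. f i) = (\<Sum>i\<in>{0..<2*k}. f i) + (\<Sum>i\<in>{2*k..<2*k+p}. f i)"
    by (simp add: lessThan_atLeast0 sum.atLeastLessThan_concat)
  also have "(\<Sum>i\<in>{0..<2*k}. f i) = (\<Sum>i\<in>{0..<k}. f i) + (\<Sum>i\<in>{k..<2*k}. f i)"
    by (simp add: sum.atLeastLessThan_concat)
  finally show ?thesis by (simp add: lessThan_atLeast0)
qed

lemma sum_wv2: "(\<Sum>i<2*k+p. wv k i * wv k i) = 2 * real k"
proof -
  have "(\<Sum>i<k. wv k i * wv k i) = real k" by (simp add: wv_def blk_def)
  moreover have "(\<Sum>i\<in>{k..<2*k}. wv k i * wv k i) = real k"
  proof -
    have "(\<Sum>i\<in>{k..<2*k}. wv k i * wv k i) = (\<Sum>i\<in>{k..<2*k}. 1)"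
      by (intro sum.cong) (auto simp: wv_def blk_def)
    then show ?thesis by simp
  qed
  moreover have "(\<Sum>i\<in>{2*k..<2*k+p}. wv k i * wv k i) = 0"
    by (intro sum.neutral) (auto simp: wv_def blk_def)
  ultimately show ?thesis by (simp add: sum_split3)
qed

lemma sum_wv: "(\<Sum>i<2*k+p. wv k i) = 0"
proof -
  have "(\<Sum>i<k. wv k i) = real k" by (simp add: wv_def blk_def)
  moreover have "(\<Sum>i\<in>{k..<2*k}. wv k i) = - real k"
  proof -
    have "(\<Sum>i\<in>{k..<2*k}. wv k i) = (\<Sum>i\<in>{k..<2*k}. -1)"
      by (intro sum.cong) (auto simp: wv_def blk_def)
    then show ?thesis by simp
  qed
  moreover have "(\<Sum>i\<in>{2*k..<2*k+p}. wv k i) = 0"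
    by (intro sum.neutral) (auto simp: wv_def blk_def)
  ultimately show ?thesis by (simp add: sum_split3)
qed

lemma row_sum_compat:
  assumes A: "A \<in> carrier_mat (2*k1+p) (2*k2+q)" and cf: "compatible_form k1 k2 A" and i: "i < 2*k1+p"
  shows "(\<Sum>l<2*k2+q. A $$ (i,l) * wv k2 l) =
     (if blk k1 i < 2 then - real k2 * wv k1 i
      else (\<Sum>l<k2. A $$ (i,l)) - (\<Sum>l\<in>{k2..<2*k2}. A $$ (i,l)))"
proof -
  have s3: "(\<Sum>l\<in>{2*k2..<2*k2+q}. A $$ (i,l) * wv k2 l) = 0"
    by (intro sum.neutral) (auto simp: wv_def blk_def)
  have s1: "(\<Sum>l<k2. A $$ (i,l) * wv k2 l) = (\<Sum>l<k2. A $$ (i,l))"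
    by (intro sum.cong) (auto simp: wv_def blk_def)
  have s2: "(\<Sum>l\<in>{k2..<2*k2}. A $$ (i,l) * wv k2 l) = - (\<Sum>l\<in>{k2..<2*k2}. A $$ (i,l))"
    by (subst sum_negf[symmetric], intro sum.cong) (auto simp: wv_def blk_def)
  have main: "(\<Sum>l<2*k2+q. A $$ (i,l) * wv k2 l) = (\<Sum>l<k2. A $$ (i,l)) - (\<Sum>l\<in>{k2..<2*k2}. A $$ (i,l))"
    by (simp add: sum_split3[of _ k2 q] s1 s2 s3)
  show ?thesis
  proof (cases "blk k1 i < 2")
    case True
    have cfi: "\<And>l. l < 2*k2 \<Longrightarrow> A $$ (i,l) = (if blk k1 i = blk k2 l then 0 else 1)"
      using cf A i True unfolding compatible_form_def by (auto simp: blk_def)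
    have a1: "(\<Sum>l<k2. A $$ (i,l)) = (if blk k1 i = 0 then 0 else real k2)"
    proof -
      have "(\<Sum>l<k2. A $$ (i,l)) = (\<Sum>l<k2. (if blk k1 i = 0 then 0 else 1))"
        using cfi by (intro sum.cong) (auto simp: blk_def)
      then show ?thesis by simp
    qed
    have a2: "(\<Sum>l\<in>{k2..<2*k2}. A $$ (i,l)) = (if blk k1 i = 1 then 0 else real k2)"
    proof -
      have "(\<Sum>l\<in>{k2..<2*k2}. A $$ (i,l)) = (\<Sum>l\<in>{k2..<2*k2}. (if blk k1 i = 1 then 0 else 1))"
        using cfi by (intro sum.cong) (auto simp: blk_def)
      then show ?thesis by simp
    qed
    show ?thesis using True main a1 a2 by (auto simp: wv_def)
  next
    case False
    then show ?thesis using main by simp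
  qed
qed

lemma compat_transpose:
  assumes "compatible_form k1 k2 A"
  shows "compatible_form k2 k1 (transpose_mat A)"
  using assms unfolding compatible_form_def by auto

lemma col_sum_compat:
  assumes A: "A \<in> carrier_mat (2*k1+p) (2*k2+q)" and cf: "compatible_form k1 k2 A" and j: "j < 2*k2+q"
  shows "(\<Sum>l<2*k1+p. A $$ (l,j) * wv k1 l) =
     (if blk k2 j < 2 then - real k1 * wv k2 j
      else (\<Sum>l<k1. A $$ (l,j)) - (\<Sum>l\<in>{k1..<2*k1}. A $$ (l,j)))"
proof -
  have At: "transpose_mat A \<in> carrier_mat (2*k2+q) (2*k1+p)" using A by auto
  have "(\<Sum>l<2*k1+p. transpose_mat A $$ (j,l) * wv k1 l) =
     (if blk k2 j < 2 then - real k1 * wv k2 j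
      else (\<Sum>l<k1. transpose_mat A $$ (j,l)) - (\<Sum>l\<in>{k1..<2*k1}. transpose_mat A $$ (j,l)))"
    by (rule row_sum_compat[OF At compat_transpose[OF cf] j])
  moreover have "(\<Sum>l<2*k1+p. transpose_mat A $$ (j,l) * wv k1 l) = (\<Sum>l<2*k1+p. A $$ (l,j) * wv k1 l)"
    using A j by (intro sum.cong) auto
  moreover have "(\<Sum>l<k1. transpose_mat A $$ (j,l)) = (\<Sum>l<k1. A $$ (l,j))"
    using A j by (intro sum.cong) auto
  moreover have "(\<Sum>l\<in>{k1..<2*k1}. transpose_mat A $$ (j,l)) = (\<Sum>l\<in>{k1..<2*k1}. A $$ (l,j))"
    using A j by (intro sum.cong) auto
  ultimately show ?thesis by simp
qed

lemma gram_both: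
  fixes c :: real
  assumes k1: "0 < k1" and k2: "0 < k2"
    and A: "A \<in> carrier_mat (2*k1+p) (2*k2+q)" and D: "D \<in> carrier_mat (2*k1+p) (2*k2+q)"
    and Dw: "\<forall>i<2*k1+p. \<forall>j<2*k2+q. D $$ (i,j) = c * wv k1 i * wv k2 j" and c: "c * c = 1"
  shows "(A * transpose_mat A = (A - D) * transpose_mat (A - D)) \<longleftrightarrow>
         (\<forall>i<2*k1+p. (\<Sum>l<2*k2+q. A $$ (i,l) * wv k2 l) = c * wv k1 i * real k2)"
    and "(transpose_mat A * A = transpose_mat (A - D) * (A - D)) \<longleftrightarrow>
         (\<forall>j<2*k2+q. (\<Sum>l<2*k1+p. A $$ (l,j) * wv k1 l) = c * wv k2 j * real k1)"
proof -
  show "(A * transpose_mat A = (A - D) * transpose_mat (A - D)) \<longleftrightarrow>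
         (\<forall>i<2*k1+p. (\<Sum>l<2*k2+q. A $$ (i,l) * wv k2 l) = c * wv k1 i * real k2)"
    using gram_side[OF A D Dw c _ wv0[OF k1]] k1 unfolding sum_wv2 by (simp add: mult.assoc)
  have At: "transpose_mat A \<in> carrier_mat (2*k2+q) (2*k1+p)" using A by auto
  have Dt: "transpose_mat D \<in> carrier_mat (2*k2+q) (2*k1+p)" using D by auto
  have Dtw: "\<forall>i<2*k2+q. \<forall>j<2*k1+p. transpose_mat D $$ (i,j) = c * wv k2 i * wv k1 j"
    using Dw D by (auto simp: mult_ac)
  have tm: "transpose_mat (A - D) = transpose_mat A - transpose_mat D" using A D by (rule transpose_minus)
  have "(transpose_mat A * transpose_mat (transpose_mat A) = (transpose_mat A - transpose_mat D) * transpose_mat (transpose_mat A - transpose_mat D)) \<longleftrightarrow>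
     (\<forall>i<2*k2+q. (\<Sum>l<2*k1+p. transpose_mat A $$ (i,l) * wv k1 l) = c * wv k2 i * (\<Sum>l<2*k1+p. wv k1 l * wv k1 l) / 2)"
    by (rule gram_side[OF At Dt Dtw c _ wv0[OF k2]]) (use k2 in simp)
  moreover have "transpose_mat (transpose_mat A - transpose_mat D) = A - D"
    using tm by (metis transpose_transpose)
  moreover have "\<forall>i<2*k2+q. (\<Sum>l<2*k1+p. transpose_mat A $$ (i,l) * wv k1 l) = (\<Sum>l<2*k1+p. A $$ (l,i) * wv k1 l)"
    using A by auto
  ultimately show "(transpose_mat A * A = transpose_mat (A - D) * (A - D)) \<longleftrightarrow>
         (\<forall>j<2*k2+q. (\<Sum>l<2*k1+p. A $$ (l,j) * wv k1 l) = c * wv k2 j * real k1)"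
    using tm by (simp add: sum_wv2 mult.assoc)
qed

lemma part1:
  assumes k1: "0 < k1" and k2: "0 < k2"
    and A: "A \<in> carrier_mat (2*k1+p) (2*k2+q)" and z: "zero_one_mat A" and cf: "compatible_form k1 k2 A"
  shows "gram_mates A (A + E_mat k1 k2 p q) \<longleftrightarrow> sum_condition k1 k2 A"
proof -
  define E where "E = E_mat k1 k2 p q"
  have Ec: "E \<in> carrier_mat (2*k1+p) (2*k2+q)" unfolding E_def by (rule E_carrier)
  define D where "D = - E"
  have Dc: "D \<in> carrier_mat (2*k1+p) (2*k2+q)" unfolding D_def using Ec by auto
  have Dw: "\<forall>i<2*k1+p. \<forall>j<2*k2+q. D $$ (i,j) = (-1) * wv k1 i * wv k2 j"
    unfolding D_def E_def using E_carrier[of k1 k2 p q] by (auto simp: E_idx)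
  have AE: "A + E = A - D" unfolding D_def using A Ec by (intro eq_matI) auto
  have AEc: "A + E \<in> carrier_mat (2*k1+p) (2*k2+q)" using A Ec by auto
  have z2: "zero_one_mat (A + E)"
    unfolding zero_one_mat_def
  proof (intro allI impI)
    fix i j assume i: "i < dim_row (A + E)" and j: "j < dim_col (A + E)"
    then have ij: "i < 2*k1+p" "j < 2*k2+q" using Ec by auto
    show "(A + E) $$ (i,j) = 0 \<or> (A + E) $$ (i,j) = 1"
    proof (cases "blk k1 i < 2 \<and> blk k2 j < 2")
      case True
      then have "A $$ (i,j) = (if blk k1 i = blk k2 j then 0 else 1)" using cf A ij unfolding compatible_form_def by auto
      then show ?thesis using ij Ec True unfolding E_def by (auto simp: E_idx wv_def)
    next
      case False
      then have "E $$ (i,j) = 0" using ij unfolding E_def by (auto simp: E_idx wv_def)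
      then show ?thesis using z A ij Ec unfolding zero_one_mat_def by auto
    qed
  qed
  have ne: "A \<noteq> A + E"
  proof
    assume "A = A + E"
    then have "A $$ (0,0) = (A + E) $$ (0,0)" by simp
    moreover have "E $$ (0,0) = 1" unfolding E_def using k1 k2 by (simp add: E_idx wv0)
    ultimately show False using Ec k1 k2 by simp
  qed
  have "gram_mates A (A + E) \<longleftrightarrow> (A * transpose_mat A = (A - D) * transpose_mat (A - D)) \<and>
     (transpose_mat A * A = transpose_mat (A - D) * (A - D))"
    unfolding gram_mates_def using A AEc z z2 ne AE Dc by auto
  also have "\<dots> \<longleftrightarrow> (\<forall>i<2*k1+p. (\<Sum>l<2*k2+q. A $$ (i,l) * wv k2 l) = (-1) * wv k1 i * real k2) \<and>
      (\<forall>j<2*k2+q. (\<Sum>l<2*k1+p. A $$ (l,j) * wv k1 l) = (-1) * wv k2 j * real k1)"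
    using gram_both[OF k1 k2 A Dc Dw] by simp
  also have "\<dots> \<longleftrightarrow> sum_condition k1 k2 A"
  proof -
    have r: "(\<forall>i<2*k1+p. (\<Sum>l<2*k2+q. A $$ (i,l) * wv k2 l) = (-1) * wv k1 i * real k2) \<longleftrightarrow>
      (\<forall>i<2*k1+p. blk k1 i = 2 \<longrightarrow> (\<Sum>j<k2. A $$ (i,j)) = (\<Sum>j\<in>{k2..<2*k2}. A $$ (i,j)))"
      using row_sum_compat[OF A cf] by (auto simp: wv_def blk_def)
    have c: "(\<forall>j<2*k2+q. (\<Sum>l<2*k1+p. A $$ (l,j) * wv k1 l) = (-1) * wv k2 j * real k1) \<longleftrightarrow>
      (\<forall>j<2*k2+q. blk k2 j = 2 \<longrightarrow> (\<Sum>i<k1. A $$ (i,j)) = (\<Sum>i\<in>{k1..<2*k1}. A $$ (i,j)))"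
      using col_sum_compat[OF A cf] by (auto simp: wv_def blk_def)
    show ?thesis unfolding sum_condition_def r c using A by auto
  qed
  finally show ?thesis unfolding E_def .
qed

lemma part2:
  assumes k1: "0 < k1" and k2: "0 < k2"
  shows "realizable (E_mat k1 k2 p q)"
proof -
  define E where "E = E_mat k1 k2 p q"
  have Ec: "E \<in> carrier_mat (2*k1+p) (2*k2+q)" unfolding E_def by (rule E_carrier)
  have zn: "zero_one_neg_mat E"
    unfolding zero_one_neg_mat_def using Ec unfolding E_def by (auto simp: E_idx wv_def)
  have rs: "\<forall>i<dim_row E. (\<Sum>j<dim_col E. E $$ (i,j)) = 0"
    using Ec unfolding E_def by (auto simp: E_idx sum_distrib_left[symmetric] sum_wv)
  have cs: "\<forall>j<dim_col E. (\<Sum>i<dim_row E. E $$ (i,j)) = 0"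
    using Ec unfolding E_def by (auto simp: E_idx sum_distrib_right[symmetric] sum_wv)
  define A where "A = mat (2*k1+p) (2*k2+q) (\<lambda>(i,j). if blk k1 i < 2 \<and> blk k2 j < 2 \<and> blk k1 i \<noteq> blk k2 j then 1 else (0::real))"
  have Ac: "A \<in> carrier_mat (2*k1+p) (2*k2+q)" unfolding A_def by auto
  have z: "zero_one_mat A" unfolding zero_one_mat_def A_def by auto
  have cf: "compatible_form k1 k2 A" unfolding compatible_form_def A_def by auto
  have sc: "sum_condition k1 k2 A"
    unfolding sum_condition_def
  proof (intro conjI allI impI)
    fix j assume j: "j < dim_col A" "blk k2 j = 2"
    have "(\<Sum>i<k1. A $$ (i,j)) = 0" using j Ac by (intro sum.neutral) (auto simp: A_def blk_def)
    moreover have "(\<Sum>i\<in>{k1..<2*k1}. A $$ (i,j)) = 0" using j Ac by (intro sum.neutral) (auto simp: A_def blk_def)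
    ultimately show "(\<Sum>i<k1. A $$ (i,j)) = (\<Sum>i\<in>{k1..<2*k1}. A $$ (i,j))" by simp
  next
    fix i assume i: "i < dim_row A" "blk k1 i = 2"
    have "(\<Sum>j<k2. A $$ (i,j)) = 0" using i Ac by (intro sum.neutral) (auto simp: A_def blk_def)
    moreover have "(\<Sum>j\<in>{k2..<2*k2}. A $$ (i,j)) = 0" using i Ac by (intro sum.neutral) (auto simp: A_def blk_def)
    ultimately show "(\<Sum>j<k2. A $$ (i,j)) = (\<Sum>j\<in>{k2..<2*k2}. A $$ (i,j))" by simp
  qed
  have "gram_mates A (A + E)" using part1[OF k1 k2 Ac z cf] sc unfolding E_def by simp
  then show ?thesis unfolding realizable_def E_def[symmetric] using zn rs cs Ac Ec by auto
qed

lemma sq1: "sqrt (real k1 * real k2) * sqrt (2 * real k2) = real k2 * sqrt (2 * real k1)"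
proof -
  have "sqrt (real k1 * real k2) * sqrt (2 * real k2) = sqrt ((real k2)\<^sup>2 * (2 * real k1))"
    by (simp add: real_sqrt_mult[symmetric] power2_eq_square mult_ac)
  also have "\<dots> = real k2 * sqrt (2 * real k1)" by (simp add: real_sqrt_mult)
  finally show ?thesis .
qed

lemma sq3: "sqrt (2 * real k1) * sqrt (2 * real k2) = 2 * sqrt (real k1 * real k2)"
proof -
  have "sqrt (2 * real k1) * sqrt (2 * real k2) = sqrt (2\<^sup>2 * (real k1 * real k2))"
    by (simp add: real_sqrt_mult[symmetric] power2_eq_square mult_ac)
  also have "\<dots> = 2 * sqrt (real k1 * real k2)" by (simp add: real_sqrt_mult)
  finally show ?thesis .
qed

lemma via_setup:
  assumes via: "gram_mates_via (E_mat k1 k2 p q) A B"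
  shows "A \<in> carrier_mat (2*k1+p) (2*k2+q) \<and> B \<in> carrier_mat (2*k1+p) (2*k2+q) \<and>
    (\<exists>c::real. c * c = 1 \<and> (\<forall>i<2*k1+p. \<forall>j<2*k2+q. (A - B) $$ (i,j) = c * wv k1 i * wv k2 j))"
proof -
  have Ec: "E_mat k1 k2 p q \<in> carrier_mat (2*k1+p) (2*k2+q)" by (rule E_carrier)
  from via have gm: "gram_mates A B" and D: "A - B = E_mat k1 k2 p q \<or> A - B = - E_mat k1 k2 p q"
    unfolding gram_mates_via_def by auto
  have dB: "dim_row B = 2*k1+p" "dim_col B = 2*k2+q"
    using D Ec by (auto dest: arg_cong[of _ _ dim_row] arg_cong[of _ _ dim_col])
  have Bc: "B \<in> carrier_mat (2*k1+p) (2*k2+q)" using dB by auto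
  have Ac: "A \<in> carrier_mat (2*k1+p) (2*k2+q)" using gm dB unfolding gram_mates_def by auto
  show ?thesis
  proof (cases "A - B = E_mat k1 k2 p q")
    case True
    then show ?thesis using Ac Bc by (intro conjI exI[of _ 1]) (auto simp: E_idx)
  next
    case False
    then have "A - B = - E_mat k1 k2 p q" using D by simp
    then show ?thesis using Ac Bc Ec by (intro conjI exI[of _ "-1"]) (auto simp: E_idx)
  qed
qed

lemma conv_AB:
  assumes k1: "0 < k1" and k2: "0 < k2" and via: "gram_mates_via (E_mat k1 k2 p q) A B"
  shows "convertible A B"
proof -
  let ?n = "2*k1+p" and ?m = "2*k2+q"
  obtain c :: real where Ac: "A \<in> carrier_mat ?n ?m" and Bc: "B \<in> carrier_mat ?n ?m"
    and c: "c * c = 1" and Dw: "\<forall>i<?n. \<forall>j<?m. (A - B) $$ (i,j) = c * wv k1 i * wv k2 j"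
    using via_setup[OF via] by blast
  have gm: "gram_mates A B" using via unfolding gram_mates_via_def by auto
  define D where "D = A - B"
  have Dc: "D \<in> carrier_mat ?n ?m" unfolding D_def using Bc by auto
  have BAD: "B = A - D" unfolding D_def using Ac Bc by (intro eq_matI) auto
  have Dw': "\<forall>i<?n. \<forall>j<?m. D $$ (i,j) = c * wv k1 i * wv k2 j" using Dw unfolding D_def .
  have g1: "A * transpose_mat A = (A - D) * transpose_mat (A - D)"
    and g2: "transpose_mat A * A = transpose_mat (A - D) * (A - D)"
    using gm BAD unfolding gram_mates_def by auto
  have R: "\<forall>i<?n. (\<Sum>l<?m. A $$ (i,l) * wv k2 l) = c * wv k1 i * real k2"
    using gram_both(1)[OF k1 k2 Ac Dc Dw' c] g1 by simp
  have C: "\<forall>j<?m. (\<Sum>l<?n. A $$ (l,j) * wv k1 l) = c * wv k2 j * real k1"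
    using gram_both(2)[OF k1 k2 Ac Dc Dw' c] g2 by simp
  define s where "s = sqrt (real k1 * real k2)"
  define a1 where "a1 = sqrt (2 * real k1)"
  define a2 where "a2 = sqrt (2 * real k2)"
  have a1: "a1 > 0" "a1 * a1 = 2 * real k1" unfolding a1_def using k1 by auto
  have a2: "a2 > 0" "a2 * a2 = 2 * real k2" unfolding a2_def using k2 by auto
  have s: "s > 0" unfolding s_def using k1 k2 by simp
  have sa2: "s * a2 = real k2 * a1" unfolding s_def a1_def a2_def by (rule sq1)
  have sa1: "s * a1 = real k1 * a2" unfolding s_def a1_def a2_def using sq1[of k2 k1] by (simp add: mult.commute)
  have a12: "a1 * a2 = 2 * s" unfolding s_def a1_def a2_def by (rule sq3)
  define u where "u i = - wv k1 i / a1" for i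
  define v where "v j = - c * wv k2 j / a2" for j
  have u1: "(\<Sum>i<?n. u i * u i) = 1"
  proof -
    have "(\<Sum>i<?n. u i * u i) = (\<Sum>i<?n. wv k1 i * wv k1 i) / (a1 * a1)"
      unfolding u_def by (simp add: sum_divide_distrib)
    then show ?thesis using a1 k1 by (simp add: sum_wv2)
  qed
  have v1: "(\<Sum>j<?m. v j * v j) = 1"
  proof -
    have "(\<Sum>j<?m. v j * v j) = (c * c) * (\<Sum>j<?m. wv k2 j * wv k2 j) / (a2 * a2)"
      unfolding v_def by (simp add: sum_divide_distrib sum_distrib_left mult_ac)
    then show ?thesis using a2 k2 c by (simp add: sum_wv2)
  qed
  have Av: "\<forall>i<?n. (\<Sum>l<?m. A $$ (i,l) * v l) = s * u i"
  proof (intro allI impI)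
    fix i assume i: "i < ?n"
    have "(\<Sum>l<?m. A $$ (i,l) * v l) = - c * (\<Sum>l<?m. A $$ (i,l) * wv k2 l) / a2"
      unfolding v_def by (simp add: sum_divide_distrib sum_distrib_left mult_ac)
    also have "\<dots> = - (c * c) * wv k1 i * real k2 / a2" using R i by (simp add: mult_ac)
    also have "\<dots> = - wv k1 i * real k2 / a2" using c by simp
    also have "\<dots> = s * u i" unfolding u_def using a1 a2 sa2
      by (simp add: field_simps)
    finally show "(\<Sum>l<?m. A $$ (i,l) * v l) = s * u i" .
  qed
  have Atu: "\<forall>j<?m. (\<Sum>k<?n. A $$ (k,j) * u k) = s * v j"
  proof (intro allI impI)
    fix j assume j: "j < ?m"
    have "(\<Sum>k<?n. A $$ (k,j) * u k) = - (\<Sum>k<?n. A $$ (k,j) * wv k1 k) / a1"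
      unfolding u_def by (simp add: sum_divide_distrib sum_negf)
    also have "\<dots> = - c * wv k2 j * real k1 / a1" using C j by simp
    also have "\<dots> = s * v j" unfolding v_def using a1 a2 sa1
      by (simp add: field_simps)
    finally show "(\<Sum>k<?n. A $$ (k,j) * u k) = s * v j" .
  qed
  have IH: "\<forall>A' \<in> carrier_mat (?n-1) (?m-1). \<exists>U S V. is_svd A' U S V"
    using svd_exists by blast
  obtain U S V where svd: "is_svd A U S V" and U0: "\<forall>i<?n. U $$ (i,0) = u i"
    and V0: "\<forall>j<?m. V $$ (j,0) = v j" and S0: "S $$ (0,0) = s"
    using svd_with_triple[OF Ac u1 v1 _ Av Atu IH] s by auto
  have Uc: "U \<in> carrier_mat ?n ?n" and Vc: "V \<in> carrier_mat ?m ?m" and Sc: "S \<in> carrier_mat ?n ?m"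
    and AUSV: "A = U * S * transpose_mat V"
    using svd Ac unfolding is_svd_def orthogonal_mat_def by auto
  define F where "F = flip_signs {0} S"
  have Fc: "F \<in> carrier_mat ?n ?m" unfolding F_def flip_signs_def using Sc by auto
  have Fidx: "F $$ (k,l) = S $$ (k,l) - (2 * s) * ((if k = 0 then 1 else 0) * (if l = 0 then 1 else 0))"
    if "k < ?n" "l < ?m" for k l
    unfolding F_def flip_signs_def using that Sc S0 by auto
  have "B = U * F * transpose_mat V"
  proof (rule eq_matI)
    fix i j assume ij: "i < dim_row (U * F * transpose_mat V)" "j < dim_col (U * F * transpose_mat V)"
    then have ij': "i < ?n" "j < ?m" using Uc Vc by auto
    have "(U * F * transpose_mat V) $$ (i,j) = (\<Sum>k<?n. \<Sum>l<?m. U $$ (i,k) * F $$ (k,l) * V $$ (j,l))"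
      by (rule triple_idx2[OF Uc Fc Vc ij'])
    also have "\<dots> = (\<Sum>k<?n. \<Sum>l<?m. U $$ (i,k) * S $$ (k,l) * V $$ (j,l)
        - (2 * s) * (((if k = 0 then 1 else 0) * U $$ (i,k)) * ((if l = 0 then 1 else 0) * V $$ (j,l))))"
    proof (intro sum.cong refl)
      fix k l assume kl: "k \<in> {..<?n}" "l \<in> {..<?m}"
      show "U $$ (i,k) * F $$ (k,l) * V $$ (j,l) = U $$ (i,k) * S $$ (k,l) * V $$ (j,l)
        - (2 * s) * (((if k = 0 then 1 else 0) * U $$ (i,k)) * ((if l = 0 then 1 else 0) * V $$ (j,l)))"
        using kl by (cases "k = 0"; cases "l = 0") (simp_all add: Fidx algebra_simps)
    qed
    also have "\<dots> = (\<Sum>k<?n. \<Sum>l<?m. U $$ (i,k) * S $$ (k,l) * V $$ (j,l))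
        - (2 * s) * ((\<Sum>k<?n. (if k = 0 then 1 else 0) * U $$ (i,k)) * (\<Sum>l<?m. (if l = 0 then 1 else 0) * V $$ (j,l)))"
    proof -
      have "(\<Sum>k<?n. \<Sum>l<?m. (2 * s) * (((if k = 0 then 1 else 0) * U $$ (i,k)) * ((if l = 0 then 1 else 0) * V $$ (j,l))))
        = (2 * s) * ((\<Sum>k<?n. (if k = 0 then 1 else 0) * U $$ (i,k)) * (\<Sum>l<?m. (if l = 0 then 1 else 0) * V $$ (j,l)))"
      proof -
        have "(2 * s) * ((\<Sum>k<?n. (if k = 0 then 1 else 0) * U $$ (i,k)) * (\<Sum>l<?m. (if l = 0 then 1 else 0) * V $$ (j,l)))
          = (2 * s) * (\<Sum>k<?n. \<Sum>l<?m. ((if k = 0 then 1 else 0) * U $$ (i,k)) * ((if l = 0 then 1 else 0) * V $$ (j,l)))"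
          by (simp only: sum_product)
        also have "\<dots> = (\<Sum>k<?n. \<Sum>l<?m. (2 * s) * (((if k = 0 then 1 else 0) * U $$ (i,k)) * ((if l = 0 then 1 else 0) * V $$ (j,l))))"
          by (simp only: sum_distrib_left)
        finally show ?thesis by simp
      qed
      then show ?thesis by (simp only: sum_subtractf)
    qed
    also have "(\<Sum>k<?n. \<Sum>l<?m. U $$ (i,k) * S $$ (k,l) * V $$ (j,l)) = A $$ (i,j)"
      using triple_idx2[OF Uc Sc Vc ij'] AUSV by simp
    also have "(\<Sum>k<?n. (if k = 0 then 1 else 0) * U $$ (i,k)) = u i"
      using U0 k1 ij' by (simp add: sum_delta_l)
    also have "(\<Sum>l<?m. (if l = 0 then 1 else 0) * V $$ (j,l)) = v j"
      using V0 k2 ij' by (simp add: sum_delta_l)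
    also have "A $$ (i,j) - 2 * s * (u i * v j) = A $$ (i,j) - D $$ (i,j)"
    proof -
      have "2 * s * (u i * v j) = c * wv k1 i * wv k2 j * (2 * s / (a1 * a2))"
        unfolding u_def v_def by (simp add: field_simps)
      also have "\<dots> = c * wv k1 i * wv k2 j" using a12 s by simp
      finally show ?thesis using Dw' ij' by simp
    qed
    also have "\<dots> = B $$ (i,j)" using BAD ij' Ac Dc by simp
    finally show "B $$ (i,j) = (U * F * transpose_mat V) $$ (i,j)" by simp
  qed (use Bc Uc Vc in auto)
  moreover have "conversion A B U S V {0}"
    unfolding conversion_def
  proof (intro conjI)
    show "zero_one_mat A" "zero_one_mat B" using gm unfolding gram_mates_def by auto
    show "is_svd A U S V" by (rule svd)
    show "{0} \<noteq> {}" by simp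
    show "{0} \<subseteq> {..<min (dim_row A) (dim_col A)}" using Ac k1 k2 by auto
    show "\<forall>i\<in>{0}. 0 < S $$ (i,i)" using S0 s by simp
  qed (use calculation F_def in simp)
  ultimately show ?thesis unfolding convertible_def by blast
qed

lemma dim_lr_vec[simp]: "dim_vec (left_vec k1 p) = 2*k1+p" "dim_vec (right_vec k2 q) = 2*k2+q"
  unfolding left_vec_def right_vec_def by auto

lemma left_vec_idx: "j < 2*k1+p \<Longrightarrow> left_vec k1 p $ j = - wv k1 j / sqrt (2 * real k1)"
  unfolding left_vec_def wv_def by auto

lemma right_vec_idx: "j < 2*k2+q \<Longrightarrow> right_vec k2 q $ j = wv k2 j / sqrt (2 * real k2)"
  unfolding right_vec_def wv_def by auto

lemma sq_cases: "(x::real) * x = a \<Longrightarrow> x = sqrt a \<or> x = - sqrt a"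
proof -
  assume "x * x = a"
  then have "sqrt a = \<bar>x\<bar>" using real_sqrt_abs2 by blast
  then show ?thesis by (cases "x \<ge> 0") auto
qed

lemma single_support:
  fixes f :: "nat \<Rightarrow> real"
  assumes "i < n" "\<forall>c<n. c \<noteq> i \<longrightarrow> f c = 0"
  shows "(\<Sum>c<n. g c * f c) = g i * f i"
proof -
  have "(\<Sum>c<n. g c * f c) = (\<Sum>c<n. if c = i then g c * f c else 0)"
    using assms by (intro sum.cong) auto
  also have "\<dots> = g i * f i" using assms(1)
    by (subst sum.delta) auto
  finally show ?thesis .
qed

lemma part4:
  assumes k1: "0 < k1" and k2: "0 < k2" and via: "gram_mates_via (E_mat k1 k2 p q) A B"
    and conv: "conversion A B U S V K"
  shows "\<exists>i. K = {i} \<and> S $$ (i,i) = sqrt (real (k1 * k2)) \<and>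
             (col U i = left_vec k1 p \<or> col U i = - left_vec k1 p) \<and>
             (col V i = right_vec k2 q \<or> col V i = - right_vec k2 q)"
proof -
  let ?n = "2*k1+p" and ?m = "2*k2+q"
  obtain c :: real where Ac: "A \<in> carrier_mat ?n ?m" and Bc: "B \<in> carrier_mat ?n ?m"
    and c: "c * c = 1" and Dw: "\<forall>i<?n. \<forall>j<?m. (A - B) $$ (i,j) = c * wv k1 i * wv k2 j"
    using via_setup[OF via] by blast
  have svd: "is_svd A U S V" and K: "K \<noteq> {}" "K \<subseteq> {..<min ?n ?m}"
    and Kpos: "\<forall>i\<in>K. S $$ (i,i) > 0" and BF: "B = U * flip_signs K S * transpose_mat V"
    using conv Ac unfolding conversion_def by auto
  have U: "orthogonal_mat ?n U" and V: "orthogonal_mat ?m V" and Sc: "S \<in> carrier_mat ?n ?m"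
    and AUSV: "A = U * S * transpose_mat V"
    using svd Ac unfolding is_svd_def by auto
  have Uc: "U \<in> carrier_mat ?n ?n" and Vc: "V \<in> carrier_mat ?m ?m" using U V unfolding orthogonal_mat_def by auto
  define F where "F = flip_signs K S"
  have Fc: "F \<in> carrier_mat ?n ?m" unfolding F_def flip_signs_def using Sc by auto
  define Dl where "Dl = S - F"
  have Dlc: "Dl \<in> carrier_mat ?n ?m" unfolding Dl_def using Fc by auto
  have Dlidx: "Dl $$ (k,l) = (if k = l \<and> k \<in> K then 2 * S $$ (k,k) else 0)" if "k < ?n" "l < ?m" for k l
    unfolding Dl_def F_def flip_signs_def using that Sc by auto
  have ABD: "A - B = U * Dl * transpose_mat V"
  proof (rule eq_matI)
    fix i j assume ij: "i < dim_row (U * Dl * transpose_mat V)" "j < dim_col (U * Dl * transpose_mat V)"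
    then have ij': "i < ?n" "j < ?m" using Uc Vc by auto
    have "(A - B) $$ (i,j) = A $$ (i,j) - B $$ (i,j)" using ij' Bc by simp
    also have "\<dots> = (U * S * transpose_mat V) $$ (i,j) - (U * F * transpose_mat V) $$ (i,j)"
      using AUSV BF F_def by simp
    also have "\<dots> = (\<Sum>k<?n. \<Sum>l<?m. U $$ (i,k) * S $$ (k,l) * V $$ (j,l)) - (\<Sum>k<?n. \<Sum>l<?m. U $$ (i,k) * F $$ (k,l) * V $$ (j,l))"
      using triple_idx2[OF Uc Sc Vc ij'] triple_idx2[OF Uc Fc Vc ij'] by simp
    also have "\<dots> = (\<Sum>k<?n. \<Sum>l<?m. U $$ (i,k) * Dl $$ (k,l) * V $$ (j,l))"
      unfolding sum_subtractf[symmetric] Dl_def using Sc Fc by (intro sum.cong refl) (auto simp: algebra_simps)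
    also have "\<dots> = (U * Dl * transpose_mat V) $$ (i,j)"
      using triple_idx2[OF Uc Dlc Vc ij'] by simp
    finally show "(A - B) $$ (i,j) = (U * Dl * transpose_mat V) $$ (i,j)" .
  qed (use Bc Uc Vc in auto)
  have UtU: "transpose_mat U * U = 1\<^sub>m ?n" and VtV: "transpose_mat V * V = 1\<^sub>m ?m"
    using U V unfolding orthogonal_mat_def by auto
  have "transpose_mat U * (A - B) * V = (transpose_mat U * U) * Dl * (transpose_mat V * V)"
    unfolding ABD using Uc Vc Dlc
    by (simp add: assoc_mult_mat[of _ ?n ?n _ ?n _ ?m] assoc_mult_mat[of _ ?n ?m _ ?m _ ?m]
        assoc_mult_mat[of _ ?n ?n _ ?m _ ?m])
  also have "\<dots> = Dl" using UtU VtV Dlc by simp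
  finally have UDV: "transpose_mat U * (A - B) * V = Dl" .
  define w where "w = wv k1"
  define z where "z = wv k2"
  define al where "al k = (\<Sum>i<?n. U $$ (i,k) * w i)" for k
  define be where "be l = (\<Sum>j<?m. V $$ (j,l) * z j)" for l
  have ABc: "A - B \<in> carrier_mat ?n ?m" using Bc by auto
  have Dlab: "Dl $$ (k,l) = c * al k * be l" if kl: "k < ?n" "l < ?m" for k l
  proof -
    have "Dl $$ (k,l) = (\<Sum>i<?n. \<Sum>j<?m. U $$ (i,k) * (A - B) $$ (i,j) * V $$ (j,l))"
      using triple_idx[OF Uc ABc Vc kl] UDV by simp
    also have "\<dots> = (\<Sum>i<?n. \<Sum>j<?m. c * (U $$ (i,k) * w i) * (V $$ (j,l) * z j))"
      using Dw unfolding w_def z_def by (intro sum.cong refl) auto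
    also have "\<dots> = c * al k * be l"
      unfolding al_def be_def by (simp add: sum_product sum_distrib_left mult_ac)
    finally show ?thesis .
  qed
  obtain i where iK: "i \<in> K" using K by auto
  have i: "i < ?n" "i < ?m" using iK K by auto
  have Sii: "c * al i * be i = 2 * S $$ (i,i)" using Dlab[OF i] Dlidx[OF i] iK by simp
  have ali: "al i \<noteq> 0" and bei: "be i \<noteq> 0" and c0: "c \<noteq> 0" using Sii Kpos iK by auto
  have Ki: "K = {i}"
  proof (rule ccontr)
    assume "K \<noteq> {i}"
    then obtain j where jK: "j \<in> K" "j \<noteq> i" using iK by blast
    have j: "j < ?n" "j < ?m" using jK K by auto
    have "c * al j * be j = 2 * S $$ (j,j)" using Dlab[OF j] Dlidx[OF j] jK by simp
    then have "be j \<noteq> 0" using Kpos jK by auto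
    moreover have "c * al i * be j = 0" using Dlab[OF i(1) j(2)] Dlidx[OF i(1) j(2)] jK by simp
    ultimately show False using ali c0 by simp
  qed
  have al0: "\<forall>k<?n. k \<noteq> i \<longrightarrow> al k = 0"
  proof (intro allI impI)
    fix k assume k: "k < ?n" "k \<noteq> i"
    have "c * al k * be i = 0" using Dlab[OF k(1) i(2)] Dlidx[OF k(1) i(2)] k by simp
    then show "al k = 0" using bei c0 by simp
  qed
  have be0: "\<forall>l<?m. l \<noteq> i \<longrightarrow> be l = 0"
  proof (intro allI impI)
    fix l assume l: "l < ?m" "l \<noteq> i"
    have "c * al i * be l = 0" using Dlab[OF i(1) l(1)] Dlidx[OF i(1) l(1)] l by simp
    then show "be l = 0" using ali c0 by simp
  qed
  have wU: "w j = U $$ (j,i) * al i" if j: "j < ?n" for j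
  proof -
    have "w j = (\<Sum>c<?n. U $$ (j,c) * al c)" unfolding al_def using recon[OF U j, of w] by simp
    also have "\<dots> = U $$ (j,i) * al i" using single_support[OF i(1) al0] .
    finally show ?thesis .
  qed
  have zV: "z j = V $$ (j,i) * be i" if j: "j < ?m" for j
  proof -
    have "z j = (\<Sum>c<?m. V $$ (j,c) * be c)" unfolding be_def using recon[OF V j, of z] by simp
    also have "\<dots> = V $$ (j,i) * be i" using single_support[OF i(2) be0] .
    finally show ?thesis .
  qed
  have al2: "al i * al i = 2 * real k1"
  proof -
    have "2 * real k1 = (\<Sum>j<?n. w j * w j)" unfolding w_def by (simp add: sum_wv2)
    also have "\<dots> = (\<Sum>j<?n. (al i * al i) * (U $$ (j,i) * U $$ (j,i)))"
      using wU by (intro sum.cong refl) (auto simp: mult_ac)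
    also have "\<dots> = al i * al i" using orth_cols[OF U i(1) i(1)] by (simp add: sum_distrib_left[symmetric])
    finally show ?thesis by simp
  qed
  have be2: "be i * be i = 2 * real k2"
  proof -
    have "2 * real k2 = (\<Sum>j<?m. z j * z j)" unfolding z_def by (simp add: sum_wv2)
    also have "\<dots> = (\<Sum>j<?m. (be i * be i) * (V $$ (j,i) * V $$ (j,i)))"
      using zV by (intro sum.cong refl) (auto simp: mult_ac)
    also have "\<dots> = be i * be i" using orth_cols[OF V i(2) i(2)] by (simp add: sum_distrib_left[symmetric])
    finally show ?thesis by simp
  qed
  have Spos: "S $$ (i,i) > 0" using Kpos iK by auto
  have "(2 * S $$ (i,i)) * (2 * S $$ (i,i)) = (c * al i * be i) * (c * al i * be i)"
    using Sii by simp
  then have "4 * (S $$ (i,i) * S $$ (i,i)) = (c * c) * (al i * al i) * (be i * be i)"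
    by (simp add: algebra_simps)
  also have "\<dots> = 4 * (real k1 * real k2)" using c al2 be2 by simp
  finally have "S $$ (i,i) * S $$ (i,i) = real k1 * real k2" by simp
  then have Sval: "S $$ (i,i) = sqrt (real (k1 * k2))"
    using Spos real_sqrt_abs2[of "S $$ (i,i)"] by simp
  have colU: "col U i = left_vec k1 p \<or> col U i = - left_vec k1 p"
  proof (cases "al i = sqrt (2 * real k1)")
    case True
    have "col U i = - left_vec k1 p"
    proof (rule eq_vecI)
      fix j assume "j < dim_vec (- left_vec k1 p)"
      then have j: "j < ?n" unfolding left_vec_def by simp
      have "U $$ (j,i) = w j / al i" using wU[OF j] ali by simp
      then show "col U i $ j = (- left_vec k1 p) $ j"
        using j i Uc True by (simp add: left_vec_idx w_def)
    qed (use Uc in \<open>simp add: left_vec_def\<close>)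
    then show ?thesis by simp
  next
    case False
    then have F: "al i = - sqrt (2 * real k1)" using sq_cases[OF al2] by simp
    have "col U i = left_vec k1 p"
    proof (rule eq_vecI)
      fix j assume "j < dim_vec (left_vec k1 p)"
      then have j: "j < ?n" unfolding left_vec_def by simp
      have "U $$ (j,i) = w j / al i" using wU[OF j] ali by simp
      then show "col U i $ j = left_vec k1 p $ j"
        using j i Uc F by (simp add: left_vec_idx w_def)
    qed (use Uc in \<open>simp add: left_vec_def\<close>)
    then show ?thesis by simp
  qed
  have colV: "col V i = right_vec k2 q \<or> col V i = - right_vec k2 q"
  proof (cases "be i = sqrt (2 * real k2)")
    case True
    have "col V i = right_vec k2 q"
    proof (rule eq_vecI)
      fix j assume "j < dim_vec (right_vec k2 q)"
      then have j: "j < ?m" unfolding right_vec_def by simp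
      have "V $$ (j,i) = z j / be i" using zV[OF j] bei by simp
      then show "col V i $ j = right_vec k2 q $ j"
        using j i Vc True by (simp add: right_vec_idx z_def)
    qed (use Vc in \<open>simp add: right_vec_def\<close>)
    then show ?thesis by simp
  next
    case False
    then have F: "be i = - sqrt (2 * real k2)" using sq_cases[OF be2] by simp
    have "col V i = - right_vec k2 q"
    proof (rule eq_vecI)
      fix j assume "j < dim_vec (- right_vec k2 q)"
      then have j: "j < ?m" unfolding right_vec_def by simp
      have "V $$ (j,i) = z j / be i" using zV[OF j] bei by simp
      then show "col V i $ j = (- right_vec k2 q) $ j"
        using j i Vc F by (simp add: right_vec_idx z_def)
    qed (use Vc in \<open>simp add: right_vec_def\<close>)
    then show ?thesis by simp
  qed
  show ?thesis using Ki Sval colU colV by blast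
qed

lemma via_sym:
  assumes via: "gram_mates_via (E_mat k1 k2 p q) A B"
  shows "gram_mates_via (E_mat k1 k2 p q) B A"
proof -
  let ?n = "2*k1+p" and ?m = "2*k2+q"
  have Ac: "A \<in> carrier_mat ?n ?m" and Bc: "B \<in> carrier_mat ?n ?m"
    using via_setup[OF via] by auto
  have gm: "gram_mates A B" and D: "A - B = E_mat k1 k2 p q \<or> A - B = - E_mat k1 k2 p q"
    using via unfolding gram_mates_via_def by auto
  have gm': "gram_mates B A" using gm Ac Bc unfolding gram_mates_def by auto
  have BA: "B - A = - (A - B)" using Ac Bc by (intro eq_matI) auto
  have "B - A = E_mat k1 k2 p q \<or> B - A = - E_mat k1 k2 p q"
    using D unfolding BA by auto
  then show ?thesis using gm' unfolding gram_mates_via_def by auto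
qed

theorem theorem4p7:
  fixes k1 k2 p q :: nat
  assumes "k1 > 0" and "k2 > 0"
  defines "E \<equiv> E_mat k1 k2 p q"
  shows
    "(\<forall>A \<in> carrier_mat (2 * k1 + p) (2 * k2 + q).
        zero_one_mat A \<and> compatible_form k1 k2 A \<longrightarrow>
        (gram_mates A (A + E) \<longleftrightarrow> sum_condition k1 k2 A))
   \<and> realizable E
   \<and> (\<forall>A B. gram_mates_via E A B \<longrightarrow> convertible A B \<and> convertible B A)
   \<and> (\<forall>A B U S V K. gram_mates_via E A B \<and> conversion A B U S V K \<longrightarrow>
        (\<exists>i. K = {i} \<and> S $$ (i,i) = sqrt (real (k1 * k2)) \<and>
             (col U i = left_vec k1 p \<or> col U i = - left_vec k1 p) \<and>
             (col V i = right_vec k2 q \<or> col V i = - right_vec k2 q)))"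
proof (intro conjI allI impI ballI)
  fix A assume "A \<in> carrier_mat (2 * k1 + p) (2 * k2 + q)" "zero_one_mat A \<and> compatible_form k1 k2 A"
  then show "gram_mates A (A + E) \<longleftrightarrow> sum_condition k1 k2 A"
    unfolding E_def using part1 assms(1,2) by blast
next
  show "realizable E" unfolding E_def using part2 assms(1,2) by blast
next
  fix A B assume "gram_mates_via E A B"
  then show "convertible A B" unfolding E_def using conv_AB assms(1,2) by blast
next
  fix A B assume "gram_mates_via E A B"
  then show "convertible B A" unfolding E_def using conv_AB via_sym assms(1,2) by blast
next
  fix A B U S V K assume "gram_mates_via E A B \<and> conversion A B U S V K"
  then show "\<exists>i. K = {i} \<and> S $$ (i,i) = sqrt (real (k1 * k2)) \<and>
             (col U i = left_vec k1 p \<or> col U i = - left_vec k1 p) \<and>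
             (col V i = right_vec k2 q \<or> col V i = - right_vec k2 q)"
    unfolding E_def using part4 assms(1,2) by blast
qed

end
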